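(* For every $k\ge1$ and $l\in\{1,\dots,k+1\}$, the maps $\widetilde{i(\alpha)}:\mathrm{gr}_{k,l}\to\mathrm{gr}_{k-1,l-1}$, $[u]\mapsto[i(\alpha)u]$, and $\widetilde X:\mathrm{gr}_{k-1,l-1}\to\mathrm{gr}_{k,l}$, $[u]\mapsto[Xu]$, are well defined and satisfy \[\widetilde X\circ\widetilde{i(\alpha)}\big|_{\mathrm{gr}_{k,l}}=r(l-1,k-l+1)\,\mathrm{Id},\qquad \widetilde{i(\alpha)}\circ\widetilde X\big|_{\mathrm{gr}_{k-1,l-1}}=r(l-1,k-l+1)\,\mathrm{Id}.\] In particular, if $r(l-1,k-l+1)\neq0$, then $\widetilde{i(\alpha)}:\mathrm{gr}_{k,l}\to\mathrm{gr}_{k-1,l-1}$ is invertible with inverse $\frac{1}{r(l-1,k-l+1)}\widetilde X$.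
   Context: Let $n\ge1$, $M=\mathbb{R}^{2n+1}$ with coordinates $(q^1,\dots,q^n,p^1,\dots,p^n,t)$. For $\mu\in\mathbb{R}$, $\mathcal{S}^k_\mu$ denotes the space of smooth functions $S(x,\xi)$ on $M\times\mathbb{R}^{2n+1}$ homogeneous polynomial of degree $k$ in $\xi=(\xi_{q^1},\dots,\xi_{q^n},\xi_{p^1},\dots,\xi_{p^n},\xi_t)$. Fix $\delta\in\mathbb{R}$ and set $R^k=\mathcal{S}^k_{\delta+\frac{k}{n+1}}$ for $k\ge0$, $R^{j}=0$ for $j<0$. Let $E_s=\sum_i(p^i\partial_{p^i}+q^i\partial_{q^i})$, $\langle E_s,\xi\rangle=\sum_i(p^i\xi_{p^i}+q^i\xi_{q^i})$, $D(S)=\sum_i(\xi_{q^i}\partial_{p^i}S-\xi_{p^i}\partial_{q^i}S)+\xi_tE_s(S)-\langle E_s,\xi\rangle\partial_tS$. Operators: $i(\alpha):R^k\to R^{k-1}$, $i(\alpha)(S)=\frac12\big(\sum_i(p^i\partial_{\xi_{q^i}}S-q^i\partial_{\xi_{p^i}}S)-\partial_{\xi_t}S\big)$; $X:R^k\to R^{k+1}$, $X(S)=D(S)+(2(n+1)\delta+k)\xi_tS$. Set $r(l,k)=-\frac{l}{2}\big(2(n+1)\delta+2k+l-1\big)$. For $k\ge0,l\ge0$, $\mathcal{F}_{k,l}=R^k\cap\ker\big(i(\alpha)^l\big)$; for $l\ge1$, $\mathrm{gr}_{k,l}=\mathcal{F}_{k,l}/\mathcal{F}_{k,l-1}$, and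 $\mathrm{gr}_{k,0}=\{0\}$. *)

theory Defs
  imports "HOL-Analysis.Analysis"
begin

text \<open>Points of M = R^(2n+1) (and covectors xi) are triples (q, p, t) with
  q, p :: real^'n and t :: real; n = CARD('n) \<ge> 1.\<close>
type_synonym 'n pt = "(real^'n) \<times> (real^'n) \<times> real"

fun iter_deriv :: "'a::real_normed_vector list \<Rightarrow> ('a \<Rightarrow> real) \<Rightarrow> 'a \<Rightarrow> real" where
  "iter_deriv [] f = f"
| "iter_deriv (v # vs) f = (\<lambda>x. frechet_derivative (iter_deriv vs f) (at x) v)"

definition smooth_fun :: "('a::real_normed_vector \<Rightarrow> real) \<Rightarrow> bool" where
  "smooth_fun f \<longleftrightarrow> (\<forall>vs x. iter_deriv vs f differentiable (at x))"

definition hom_poly :: "nat \<Rightarrow> ('a::euclidean_space \<Rightarrow> 'a \<Rightarrow> real) \<Rightarrow> bool" where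
  "hom_poly k S \<longleftrightarrow> (\<exists>E c. finite E \<and>
      (\<forall>e\<in>E. sum e Basis = k \<and> smooth_fun (c e)) \<and>
      (\<forall>x \<xi>. S x \<xi> = (\<Sum>e\<in>E. c e x * (\<Prod>b\<in>Basis. (\<xi> \<bullet> b) ^ e b))))"

text \<open>R^k (as a space of functions; the weight only affects the action, not the space).\<close>
definition Rsp :: "nat \<Rightarrow> ('n::finite pt \<Rightarrow> 'n pt \<Rightarrow> real) set" where
  "Rsp k = {S. hom_poly k S}"

definition dq :: "'n::finite \<Rightarrow> 'n pt" where "dq i = (axis i 1, 0, 0)"
definition dp :: "'n::finite \<Rightarrow> 'n pt" where "dp i = (0, axis i 1, 0)"
definition dt :: "'n::finite pt" where "dt = (0, 0, 1)"

definition qc :: "'n::finite pt \<Rightarrow> 'n \<Rightarrow> real" where "qc x i = fst x $ i"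
definition pc :: "'n::finite pt \<Rightarrow> 'n \<Rightarrow> real" where "pc x i = fst (snd x) $ i"
definition tc :: "'n::finite pt \<Rightarrow> real" where "tc x = snd (snd x)"

definition pdx :: "'n::finite pt \<Rightarrow> ('n pt \<Rightarrow> 'n pt \<Rightarrow> real) \<Rightarrow> 'n pt \<Rightarrow> 'n pt \<Rightarrow> real" where
  "pdx v S = (\<lambda>x \<xi>. frechet_derivative (\<lambda>y. S y \<xi>) (at x) v)"
definition pdxi :: "'n::finite pt \<Rightarrow> ('n pt \<Rightarrow> 'n pt \<Rightarrow> real) \<Rightarrow> 'n pt \<Rightarrow> 'n pt \<Rightarrow> real" where
  "pdxi v S = (\<lambda>x \<xi>. frechet_derivative (\<lambda>\<eta>. S x \<eta>) (at \<xi>) v)"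

definition Es :: "('n::finite pt \<Rightarrow> 'n pt \<Rightarrow> real) \<Rightarrow> 'n pt \<Rightarrow> 'n pt \<Rightarrow> real" where
  "Es S = (\<lambda>x \<xi>. \<Sum>i\<in>UNIV. pc x i * pdx (dp i) S x \<xi> + qc x i * pdx (dq i) S x \<xi>)"

definition Es_xi :: "'n::finite pt \<Rightarrow> 'n pt \<Rightarrow> real" where
  "Es_xi x \<xi> = (\<Sum>i\<in>UNIV. pc x i * pc \<xi> i + qc x i * qc \<xi> i)"

definition Dop :: "('n::finite pt \<Rightarrow> 'n pt \<Rightarrow> real) \<Rightarrow> 'n pt \<Rightarrow> 'n pt \<Rightarrow> real" where
  "Dop S = (\<lambda>x \<xi>. (\<Sum>i\<in>UNIV. qc \<xi> i * pdx (dp i) S x \<xi> - pc \<xi> i * pdx (dq i) S x \<xi>)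
                  + tc \<xi> * Es S x \<xi> - Es_xi x \<xi> * pdx dt S x \<xi>)"

definition ialpha :: "('n::finite pt \<Rightarrow> 'n pt \<Rightarrow> real) \<Rightarrow> 'n pt \<Rightarrow> 'n pt \<Rightarrow> real" where
  "ialpha S = (\<lambda>x \<xi>. (1/2) * ((\<Sum>i\<in>UNIV. pc x i * pdxi (dq i) S x \<xi> - qc x i * pdxi (dp i) S x \<xi>)
                                - pdxi dt S x \<xi>))"

text \<open>The operator X on R^k (k = degree of the argument).\<close>
definition Xop :: "real \<Rightarrow> nat \<Rightarrow> ('n::finite pt \<Rightarrow> 'n pt \<Rightarrow> real) \<Rightarrow> 'n pt \<Rightarrow> 'n pt \<Rightarrow> real" where
  "Xop \<delta> k S = (\<lambda>x \<xi>. Dop S x \<xi> + (2 * (real CARD('n) + 1) * \<delta> + real k) * tc \<xi> * S x \<xi>)"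

definition rr :: "nat \<Rightarrow> real \<Rightarrow> nat \<Rightarrow> nat \<Rightarrow> real" where
  "rr n \<delta> l k = - (real l / 2) * (2 * (real n + 1) * \<delta> + 2 * real k + real l - 1)"

definition Fsp :: "nat \<Rightarrow> nat \<Rightarrow> ('n::finite pt \<Rightarrow> 'n pt \<Rightarrow> real) set" where
  "Fsp k l = {S \<in> Rsp k. (ialpha ^^ l) S = (\<lambda>x \<xi>. 0)}"

text \<open>gr_{k,l} = F_{k,l}/F_{k,l-1}. For l = 0 (natural subtraction) this is F_{k,0}/F_{k,0},
  the one-point quotient, matching the convention gr_{k,0} = {0}.\<close>
definition grrel :: "nat \<Rightarrow> nat \<Rightarrow> (('n::finite pt \<Rightarrow> 'n pt \<Rightarrow> real) \<times> ('n pt \<Rightarrow> 'n pt \<Rightarrow> real)) set" where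
  "grrel k l = {(u, v). u \<in> Fsp k l \<and> v \<in> Fsp k l \<and> (\<lambda>x \<xi>. u x \<xi> - v x \<xi>) \<in> Fsp k (l - 1)}"

definition gr :: "nat \<Rightarrow> nat \<Rightarrow> ('n::finite pt \<Rightarrow> 'n pt \<Rightarrow> real) set set" where
  "gr k l = Fsp k l // grrel k l"

definition cls :: "nat \<Rightarrow> nat \<Rightarrow> ('n::finite pt \<Rightarrow> 'n pt \<Rightarrow> real) \<Rightarrow> ('n pt \<Rightarrow> 'n pt \<Rightarrow> real) set" where
  "cls k l u = grrel k l `` {u}"

definition rep :: "'a set \<Rightarrow> 'a" where "rep C = (SOME u. u \<in> C)"

definition scls :: "nat \<Rightarrow> nat \<Rightarrow> real \<Rightarrow> ('n::finite pt \<Rightarrow> 'n pt \<Rightarrow> real) set \<Rightarrow> ('n pt \<Rightarrow> 'n pt \<Rightarrow> real) set" where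
  "scls k l c C = cls k l (\<lambda>x \<xi>. c * rep C x \<xi>)"

definition ialpha_t :: "nat \<Rightarrow> nat \<Rightarrow> ('n::finite pt \<Rightarrow> 'n pt \<Rightarrow> real) set \<Rightarrow> ('n pt \<Rightarrow> 'n pt \<Rightarrow> real) set" where
  "ialpha_t k l C = cls (k - 1) (l - 1) (ialpha (rep C))"

definition X_t :: "real \<Rightarrow> nat \<Rightarrow> nat \<Rightarrow> ('n::finite pt \<Rightarrow> 'n pt \<Rightarrow> real) set \<Rightarrow> ('n pt \<Rightarrow> 'n pt \<Rightarrow> real) set" where
  "X_t \<delta> k l D = cls k l (Xop \<delta> (k - 1) (rep D))"

end

theory Submission
  imports Defs
begin

lemma iter_deriv_append: "iter_deriv vs (iter_deriv ws f) = iter_deriv (vs @ ws) f"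
  by (induction vs) auto

lemma smooth_differentiable: "smooth_fun f \<Longrightarrow> f differentiable (at x)"
  unfolding smooth_fun_def by (metis iter_deriv.simps(1))

lemma smooth_deriv: "smooth_fun f \<Longrightarrow> smooth_fun (\<lambda>x. frechet_derivative f (at x) v)"
  unfolding smooth_fun_def
proof (intro allI)
  fix vs x assume "\<forall>vs x. iter_deriv vs f differentiable at x"
  moreover have "iter_deriv vs (\<lambda>x. frechet_derivative f (at x) v) = iter_deriv (vs @ [v]) f"
    using iter_deriv_append[of vs "[v]" f] by simp
  ultimately show "iter_deriv vs (\<lambda>x. frechet_derivative f (at x) v) differentiable at x" by simp
qed

lemma smooth_intro:
  assumes "\<And>x. f differentiable (at x)" "\<And>v. smooth_fun (\<lambda>x. frechet_derivative f (at x) v)"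
  shows "smooth_fun f"
  unfolding smooth_fun_def
proof (intro allI)
  fix vs x
  show "iter_deriv vs f differentiable at x"
  proof (cases vs rule: rev_exhaust)
    case Nil then show ?thesis using assms(1) by simp
  next
    case (snoc ws v)
    have "iter_deriv vs f = iter_deriv ws (\<lambda>x. frechet_derivative f (at x) v)"
      using iter_deriv_append[of ws "[v]" f] snoc by simp
    then show ?thesis using assms(2)[of v] unfolding smooth_fun_def by simp
  qed
qed

lemma fd_at: "(f has_derivative f') (at x) \<Longrightarrow> frechet_derivative f (at x) v = f' v"
  using frechet_derivative_at by metis

lemma smooth_const: "smooth_fun (\<lambda>x. c)"
proof -
  have "\<forall>c. iter_deriv vs (\<lambda>x. c) differentiable at x" for vs and x :: 'a
  proof -
    have "\<exists>d. iter_deriv vs (\<lambda>x::'a. c) = (\<lambda>x. d)" for c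
      by (induction vs) auto
    then show ?thesis by (metis differentiable_const)
  qed
  then show ?thesis unfolding smooth_fun_def by blast
qed

lemma smooth_linear: "bounded_linear L \<Longrightarrow> smooth_fun L"
  apply (rule smooth_intro)
   apply (simp add: bounded_linear_imp_differentiable)
  apply (subst fd_at[OF bounded_linear_imp_has_derivative])
  apply assumption
  apply (rule smooth_const)
  done

lemma iter_deriv_add:
  assumes "smooth_fun f" "smooth_fun g"
  shows "iter_deriv vs (\<lambda>x. f x + g x) = (\<lambda>x. iter_deriv vs f x + iter_deriv vs g x)"
proof (induction vs)
  case Nil then show ?case by simp
next
  case (Cons v vs)
  have df: "\<And>x. iter_deriv vs f differentiable at x" and dg: "\<And>x. iter_deriv vs g differentiable at x"
    using assms unfolding smooth_fun_def by auto
  show ?case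
    apply (simp only: iter_deriv.simps Cons)
    apply (rule ext)
    apply (rule fd_at)
    apply (rule has_derivative_add)
    using df dg frechet_derivative_works apply blast+
    done
qed

lemma smooth_add: "smooth_fun f \<Longrightarrow> smooth_fun g \<Longrightarrow> smooth_fun (\<lambda>x. f x + g x)"
  unfolding smooth_fun_def[of "\<lambda>x. f x + g x"] iter_deriv_add
  by (simp add: smooth_fun_def)

inductive Qp :: "('a::real_normed_vector \<Rightarrow> real) \<Rightarrow> ('a \<Rightarrow> real) \<Rightarrow> ('a \<Rightarrow> real) \<Rightarrow> bool" for f g where
  Qb: "Qp f g (\<lambda>x. iter_deriv as f x * iter_deriv bs g x)"
| Qa: "Qp f g h1 \<Longrightarrow> Qp f g h2 \<Longrightarrow> Qp f g (\<lambda>x. h1 x + h2 x)"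

lemma Qp_step:
  assumes sf: "smooth_fun f" and sg: "smooth_fun g" and "Qp f g h"
  shows "(\<forall>x. h differentiable (at x)) \<and> (\<forall>v. Qp f g (\<lambda>x. frechet_derivative h (at x) v))"
  using assms(3)
proof induction
  case (Qb as bs)
  define F where "F = iter_deriv as f"
  define G where "G = iter_deriv bs g"
  have dF: "\<And>x. (F has_derivative frechet_derivative F (at x)) (at x)"
    using sf unfolding smooth_fun_def F_def frechet_derivative_works[symmetric] by blast
  have dG: "\<And>x. (G has_derivative frechet_derivative G (at x)) (at x)"
    using sg unfolding smooth_fun_def G_def frechet_derivative_works[symmetric] by blast
  have H: "\<And>x. ((\<lambda>x. F x * G x) has_derivative (\<lambda>y. F x * frechet_derivative G (at x) y + frechet_derivative F (at x) y * G x)) (at x)"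
    by (rule has_derivative_mult[OF dF dG])
  have E: "(\<lambda>x. frechet_derivative (\<lambda>x. F x * G x) (at x) v) = (\<lambda>x. iter_deriv as f x * iter_deriv (v#bs) g x + iter_deriv (v#as) f x * iter_deriv bs g x)" for v
    by (rule ext, subst fd_at[OF H], simp add: F_def G_def)
  have "(\<lambda>x. F x * G x) differentiable (at x)" for x
    using H[of x] by (rule differentiableI)
  moreover have "Qp f g (\<lambda>x. iter_deriv as f x * iter_deriv (v#bs) g x + iter_deriv (v#as) f x * iter_deriv bs g x)" for v
    by (intro Qp.Qa Qp.Qb)
  ultimately show ?case
    unfolding E[unfolded F_def G_def] by (simp add: F_def G_def)
next
  case (Qa h1 h2)
  have E: "(\<lambda>x. frechet_derivative (\<lambda>x. h1 x + h2 x) (at x) v) = (\<lambda>x. frechet_derivative h1 (at x) v + frechet_derivative h2 (at x) v)" for v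
    apply (rule ext, rule fd_at, rule has_derivative_add)
    using Qa frechet_derivative_works by blast+
  show ?case
    using Qa E by (auto intro: Qp.Qa)
qed

lemma smooth_mult: "smooth_fun f \<Longrightarrow> smooth_fun g \<Longrightarrow> smooth_fun (\<lambda>x. f x * g x)"
proof -
  assume sf: "smooth_fun f" and sg: "smooth_fun g"
  have "Qp f g (iter_deriv vs (\<lambda>x. f x * g x))" for vs
  proof (induction vs)
    case Nil then show ?case using Qp.Qb[of f g "[]" "[]"] by simp
  next
    case (Cons v vs) then show ?case using Qp_step[OF sf sg] by simp
  qed
  then show ?thesis using Qp_step[OF sf sg] unfolding smooth_fun_def by blast
qed

lemma smooth_sum: "finite I \<Longrightarrow> (\<And>i. i \<in> I \<Longrightarrow> smooth_fun (f i)) \<Longrightarrow> smooth_fun (\<lambda>x. \<Sum>i\<in>I. f i x)"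
  by (induction I rule: finite_induct) (auto intro: smooth_add smooth_const)

lemma smooth_prod: "finite I \<Longrightarrow> (\<And>i. i \<in> I \<Longrightarrow> smooth_fun (f i)) \<Longrightarrow> smooth_fun (\<lambda>x. \<Prod>i\<in>I. f i x)"
  by (induction I rule: finite_induct) (auto intro: smooth_mult smooth_const)

lemma smooth_power: "smooth_fun f \<Longrightarrow> smooth_fun (\<lambda>x. f x ^ n)"
  by (induction n) (auto intro: smooth_mult smooth_const)

definition mnm :: "('a::euclidean_space \<Rightarrow> nat) \<Rightarrow> 'a \<Rightarrow> real" where
  "mnm e \<xi> = (\<Prod>b\<in>Basis. (\<xi> \<bullet> b) ^ e b)"

lemma hom_poly_rep:
  assumes "hom_poly k S"
  obtains E c where "finite E" "\<And>e. e \<in> E \<Longrightarrow> sum e Basis = k"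
    "\<And>e. e \<in> E \<Longrightarrow> smooth_fun (c e)" "S = (\<lambda>x \<xi>. \<Sum>e\<in>E. c e x * mnm e \<xi>)"
proof -
  obtain E c where "finite E" "\<forall>e\<in>E. sum e Basis = k \<and> smooth_fun (c e)"
    "\<forall>x \<xi>. S x \<xi> = (\<Sum>e\<in>E. c e x * (\<Prod>b\<in>Basis. (\<xi> \<bullet> b) ^ e b))"
    using assms unfolding hom_poly_def by blast
  then show ?thesis by (intro that[of E c] ext) (auto simp: mnm_def)
qed

lemma hom_polyI:
  assumes "finite E" "\<And>e. e \<in> E \<Longrightarrow> sum e Basis = k"
    "\<And>e. e \<in> E \<Longrightarrow> smooth_fun (c e)" "\<And>x \<xi>. S x \<xi> = (\<Sum>e\<in>E. c e x * mnm e \<xi>)"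
  shows "hom_poly k S"
  unfolding hom_poly_def using assms unfolding mnm_def by blast

lemma hp_zero: "hom_poly k (\<lambda>x \<xi>. 0)"
  by (rule hom_polyI[of "{}"]) auto

lemma sum_if_subset: "finite A \<Longrightarrow> B \<subseteq> A \<Longrightarrow> (\<Sum>e\<in>A. if e \<in> B then f e else 0) = (\<Sum>e\<in>B. f e)"
  by (metis (no_types) Int_absorb1 sum.inter_restrict)

lemma hp_add:
  assumes "hom_poly k S" "hom_poly k T"
  shows "hom_poly k (\<lambda>x \<xi>. S x \<xi> + T x \<xi>)"
proof -
  obtain E1 c1 where 1: "finite E1" "\<And>e. e \<in> E1 \<Longrightarrow> sum e Basis = k"
    "\<And>e. e \<in> E1 \<Longrightarrow> smooth_fun (c1 e)" "S = (\<lambda>x \<xi>. \<Sum>e\<in>E1. c1 e x * mnm e \<xi>)"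
    using hom_poly_rep[OF assms(1)] by blast
  obtain E2 c2 where 2: "finite E2" "\<And>e. e \<in> E2 \<Longrightarrow> sum e Basis = k"
    "\<And>e. e \<in> E2 \<Longrightarrow> smooth_fun (c2 e)" "T = (\<lambda>x \<xi>. \<Sum>e\<in>E2. c2 e x * mnm e \<xi>)"
    using hom_poly_rep[OF assms(2)] by blast
  define c where "c e x = (if e \<in> E1 then c1 e x else 0) + (if e \<in> E2 then c2 e x else 0)" for e x
  show ?thesis
  proof (rule hom_polyI[of "E1 \<union> E2" k c])
    show "finite (E1 \<union> E2)" using 1 2 by simp
    show "e \<in> E1 \<union> E2 \<Longrightarrow> sum e Basis = k" for e using 1 2 by auto
    show "smooth_fun (c e)" for e
    proof -
      have "smooth_fun (\<lambda>x. if e \<in> E1 then c1 e x else 0)" by (cases "e \<in> E1") (auto simp: smooth_const 1)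
      moreover have "smooth_fun (\<lambda>x. if e \<in> E2 then c2 e x else 0)" by (cases "e \<in> E2") (auto simp: smooth_const 2)
      ultimately show ?thesis unfolding c_def by (rule smooth_add)
    qed
    fix x \<xi>
    have "(\<Sum>e\<in>E1 \<union> E2. c e x * mnm e \<xi>) =
      (\<Sum>e\<in>E1 \<union> E2. if e \<in> E1 then c1 e x * mnm e \<xi> else 0) + (\<Sum>e\<in>E1 \<union> E2. if e \<in> E2 then c2 e x * mnm e \<xi> else 0)"
      unfolding c_def sum.distrib[symmetric] by (rule sum.cong) (auto simp: algebra_simps)
    also have "\<dots> = S x \<xi> + T x \<xi>"
      using 1 2 by (simp add: sum_if_subset)
    finally show "S x \<xi> + T x \<xi> = (\<Sum>e\<in>E1 \<union> E2. c e x * mnm e \<xi>)" by simp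
  qed
qed

lemma hp_sum:
  "finite I \<Longrightarrow> (\<And>i. i \<in> I \<Longrightarrow> hom_poly k (S i)) \<Longrightarrow> hom_poly k (\<lambda>x \<xi>. \<Sum>i\<in>I. S i x \<xi>)"
  by (induction I rule: finite_induct) (auto intro: hp_add hp_zero)

lemma hp_term: "smooth_fun c \<Longrightarrow> sum e Basis = k \<Longrightarrow> hom_poly k (\<lambda>x \<xi>. c x * mnm e \<xi>)"
  by (rule hom_polyI[of "{e}" k "\<lambda>_. c"]) auto

lemma hp_xmult:
  assumes "hom_poly k S" "smooth_fun a"
  shows "hom_poly k (\<lambda>x \<xi>. a x * S x \<xi>)"
proof -
  obtain E c where 1: "finite E" "\<And>e. e \<in> E \<Longrightarrow> sum e Basis = k"
    "\<And>e. e \<in> E \<Longrightarrow> smooth_fun (c e)" "S = (\<lambda>x \<xi>. \<Sum>e\<in>E. c e x * mnm e \<xi>)"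
    using hom_poly_rep[OF assms(1)] by blast
  have "hom_poly k (\<lambda>x \<xi>. \<Sum>e\<in>E. (a x * c e x) * mnm e \<xi>)"
    using 1 assms(2) by (intro hp_sum hp_term smooth_mult) auto
  then show ?thesis unfolding 1(4) by (simp add: sum_distrib_left mult.assoc)
qed

lemma hp_scal: "hom_poly k S \<Longrightarrow> hom_poly k (\<lambda>x \<xi>. a * S x \<xi>)"
  using hp_xmult[of k S "\<lambda>x. a"] smooth_const by blast

lemma mnm_upd:
  assumes "b \<in> (Basis::'a::euclidean_space set)"
  shows "mnm (e(b := n)) \<xi> = (\<xi> \<bullet> b) ^ n * (\<Prod>b'\<in>Basis - {b}. (\<xi> \<bullet> b') ^ e b')"
  unfolding mnm_def using assms by (simp add: prod.remove)

lemma mnm_remove: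
  assumes "b \<in> (Basis::'a::euclidean_space set)"
  shows "mnm e \<xi> = (\<xi> \<bullet> b) ^ e b * (\<Prod>b'\<in>Basis - {b}. (\<xi> \<bullet> b') ^ e b')"
  using mnm_upd[OF assms, of e "e b"] by simp

lemma sum_upd:
  assumes "b \<in> (Basis::'a::euclidean_space set)"
  shows "sum (e(b := n)) Basis = n + sum e (Basis - {b})"
  using assms by (simp add: sum.remove)

lemma sum_remove:
  assumes "b \<in> (Basis::'a::euclidean_space set)"
  shows "sum e Basis = e b + sum e (Basis - {b})"
  using assms by (simp add: sum.remove)

lemma hp_ximult:
  assumes "hom_poly k S" "b \<in> Basis"
  shows "hom_poly (Suc k) (\<lambda>x \<xi>. (\<xi> \<bullet> b) * S x \<xi>)"
proof -
  obtain E c where 1: "finite E" "\<And>e. e \<in> E \<Longrightarrow> sum e Basis = k"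
    "\<And>e. e \<in> E \<Longrightarrow> smooth_fun (c e)" "S = (\<lambda>x \<xi>. \<Sum>e\<in>E. c e x * mnm e \<xi>)"
    using hom_poly_rep[OF assms(1)] by blast
  have "sum (e(b := Suc (e b))) Basis = Suc k" if e: "e \<in> E" for e
    using sum_upd[OF assms(2), of e "Suc (e b)"] sum_remove[OF assms(2), of e] 1(2)[OF e] by simp
  then have "hom_poly (Suc k) (\<lambda>x \<xi>. \<Sum>e\<in>E. c e x * mnm (e(b := Suc (e b))) \<xi>)"
    using 1 by (intro hp_sum hp_term) auto
  moreover have "mnm (e(b := Suc (e b))) \<xi> = (\<xi> \<bullet> b) * mnm e \<xi>" for e \<xi>
    using mnm_upd[OF assms(2)] mnm_remove[OF assms(2)] by simp
  ultimately show ?thesis unfolding 1(4) by (simp add: sum_distrib_left algebra_simps)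
qed

lemma sep_hasdx:
  fixes a :: "'e \<Rightarrow> 'x::real_normed_vector \<Rightarrow> real"
  shows "(\<And>e. e \<in> E \<Longrightarrow> a e differentiable (at x)) \<Longrightarrow>
   ((\<lambda>y. \<Sum>e\<in>E. a e y * g e \<xi>) has_derivative (\<lambda>v. \<Sum>e\<in>E. frechet_derivative (a e) (at x) v * g e \<xi>)) (at x)"
  apply (rule has_derivative_sum)
  apply (rule has_derivative_mult_left)
  by (simp add: frechet_derivative_works)

lemma sep_hasdxi:
  fixes g :: "'e \<Rightarrow> 'x::real_normed_vector \<Rightarrow> real"
  shows "(\<And>e. e \<in> E \<Longrightarrow> g e differentiable (at \<xi>)) \<Longrightarrow>
   ((\<lambda>\<eta>. \<Sum>e\<in>E. a e x * g e \<eta>) has_derivative (\<lambda>w. \<Sum>e\<in>E. a e x * frechet_derivative (g e) (at \<xi>) w)) (at \<xi>)"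
  apply (rule has_derivative_sum)
  apply (rule has_derivative_mult_right)
  by (simp add: frechet_derivative_works)

definition mnm_d :: "('a::euclidean_space \<Rightarrow> nat) \<Rightarrow> 'a \<Rightarrow> 'a \<Rightarrow> real" where
  "mnm_d e \<xi> y = (\<Sum>b\<in>Basis. (of_nat (e b) * (y \<bullet> b) * (\<xi> \<bullet> b) ^ (e b - 1)) * (\<Prod>j\<in>Basis - {b}. (\<xi> \<bullet> j) ^ e j))"

lemma mnm_hasd: "(mnm e has_derivative mnm_d e \<xi>) (at \<xi>)"
proof -
  have "((\<lambda>\<eta>. \<Prod>b\<in>Basis. (\<eta> \<bullet> b) ^ e b) has_derivative mnm_d e \<xi>) (at \<xi>)"
    unfolding mnm_d_def
    by (intro has_derivative_prod has_derivative_power has_derivative_inner_left has_derivative_ident)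
  then show ?thesis unfolding mnm_def[abs_def] .
qed

lemma mnm_fd: "frechet_derivative (mnm e) (at \<xi>) = mnm_d e \<xi>"
  by (rule frechet_derivative_at[OF mnm_hasd, symmetric])

lemma mnm_differentiable: "mnm e differentiable (at \<xi>)"
  using mnm_hasd differentiableI by blast

lemma mnm_d_basis:
  assumes b: "b \<in> Basis"
  shows "mnm_d e \<xi> b = of_nat (e b) * mnm (e(b := e b - 1)) \<xi>"
proof -
  have "mnm_d e \<xi> b = (\<Sum>b'\<in>Basis. if b' = b then (of_nat (e b) * (\<xi> \<bullet> b) ^ (e b - 1)) * (\<Prod>j\<in>Basis - {b}. (\<xi> \<bullet> j) ^ e j) else 0)"
    unfolding mnm_d_def using b by (intro sum.cong) (auto simp: inner_Basis inner_commute)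
  also have "\<dots> = (of_nat (e b) * (\<xi> \<bullet> b) ^ (e b - 1)) * (\<Prod>j\<in>Basis - {b}. (\<xi> \<bullet> j) ^ e j)"
    using b by (simp add: sum.delta')
  finally show ?thesis using mnm_upd[OF b, of e "e b - 1"] by simp
qed

lemma mnm_d_euler: "mnm_d e \<xi> \<xi> = of_nat (sum e Basis) * mnm e \<xi>"
proof -
  have "mnm_d e \<xi> \<xi> = (\<Sum>b\<in>Basis. of_nat (e b) * mnm e \<xi>)"
    unfolding mnm_d_def
  proof (rule sum.cong)
    fix b :: 'a assume b: "b \<in> Basis"
    have eq: "of_nat (e b) * (\<xi> \<bullet> b) * (\<xi> \<bullet> b) ^ (e b - 1) = of_nat (e b) * (\<xi> \<bullet> b) ^ e b"
      by (cases "e b") auto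
    show "of_nat (e b) * (\<xi> \<bullet> b) * (\<xi> \<bullet> b) ^ (e b - 1) * (\<Prod>j\<in>Basis - {b}. (\<xi> \<bullet> j) ^ e j) =
      of_nat (e b) * mnm e \<xi>"
      unfolding mnm_remove[OF b, of e \<xi>] by (subst eq) (simp add: mult.assoc)
  qed simp
  then show ?thesis by (simp add: sum_distrib_right)
qed

lemma hp_pdx_rep:
  assumes "\<And>e. e \<in> E \<Longrightarrow> smooth_fun (c e)"
  shows "pdx v (\<lambda>x \<xi>. \<Sum>e\<in>E. c e x * g e \<xi>) x \<xi> = (\<Sum>e\<in>E. frechet_derivative (c e) (at x) v * g e \<xi>)"
  unfolding pdx_def
  by (rule fd_at, rule sep_hasdx) (use assms smooth_differentiable in blast)

lemma hp_pdxi_rep: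
  "pdxi w (\<lambda>x \<xi>. \<Sum>e\<in>E. c e x * mnm e \<xi>) x \<xi> = (\<Sum>e\<in>E. c e x * mnm_d e \<xi> w)"
  unfolding pdxi_def
  by (subst fd_at[OF sep_hasdxi[OF mnm_differentiable]]) (simp add: mnm_fd)

lemma hp_hasdx:
  assumes "hom_poly k S"
  shows "((\<lambda>y. S y \<xi>) has_derivative (\<lambda>v. pdx v S x \<xi>)) (at x)"
proof -
  obtain E c where 1: "finite E" "\<And>e. e \<in> E \<Longrightarrow> sum e Basis = k"
    "\<And>e. e \<in> E \<Longrightarrow> smooth_fun (c e)" "S = (\<lambda>x \<xi>. \<Sum>e\<in>E. c e x * mnm e \<xi>)"
    using hom_poly_rep[OF assms(1)] by blast
  have "(\<lambda>y. S y \<xi>) differentiable (at x)"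
    unfolding 1(4) using sep_hasdx[of E c x mnm \<xi>] 1(3) smooth_differentiable differentiableI by blast
  then show ?thesis unfolding pdx_def by (simp add: frechet_derivative_works)
qed

lemma hp_hasdxi:
  assumes "hom_poly k S"
  shows "((\<lambda>\<eta>. S x \<eta>) has_derivative (\<lambda>w. pdxi w S x \<xi>)) (at \<xi>)"
proof -
  obtain E c where 1: "finite E" "\<And>e. e \<in> E \<Longrightarrow> sum e Basis = k"
    "\<And>e. e \<in> E \<Longrightarrow> smooth_fun (c e)" "S = (\<lambda>x \<xi>. \<Sum>e\<in>E. c e x * mnm e \<xi>)"
    using hom_poly_rep[OF assms(1)] by blast
  have "(\<lambda>\<eta>. S x \<eta>) differentiable (at \<xi>)"
    unfolding 1(4) using sep_hasdxi[of E mnm \<xi> c x] mnm_differentiable differentiableI by blast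
  then show ?thesis unfolding pdxi_def by (simp add: frechet_derivative_works)
qed

lemma hp_pdx:
  assumes "hom_poly k S"
  shows "hom_poly k (pdx v S)"
proof -
  obtain E c where 1: "finite E" "\<And>e. e \<in> E \<Longrightarrow> sum e Basis = k"
    "\<And>e. e \<in> E \<Longrightarrow> smooth_fun (c e)" "S = (\<lambda>x \<xi>. \<Sum>e\<in>E. c e x * mnm e \<xi>)"
    using hom_poly_rep[OF assms(1)] by blast
  have "pdx v S = (\<lambda>x \<xi>. \<Sum>e\<in>E. frechet_derivative (c e) (at x) v * mnm e \<xi>)"
    unfolding 1(4) by (intro ext hp_pdx_rep 1(3))
  moreover have "hom_poly k (\<lambda>x \<xi>. \<Sum>e\<in>E. frechet_derivative (c e) (at x) v * mnm e \<xi>)"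
    using 1 by (intro hp_sum hp_term smooth_deriv) auto
  ultimately show ?thesis by simp
qed

lemma hp_pdxi:
  assumes "hom_poly k S" "b \<in> Basis"
  shows "hom_poly (k - 1) (pdxi b S)"
proof -
  obtain E c where 1: "finite E" "\<And>e. e \<in> E \<Longrightarrow> sum e Basis = k"
    "\<And>e. e \<in> E \<Longrightarrow> smooth_fun (c e)" "S = (\<lambda>x \<xi>. \<Sum>e\<in>E. c e x * mnm e \<xi>)"
    using hom_poly_rep[OF assms(1)] by blast
  have "pdxi b S = (\<lambda>x \<xi>. \<Sum>e\<in>E. (of_nat (e b) * c e x) * mnm (e(b := e b - 1)) \<xi>)"
    unfolding 1(4) hp_pdxi_rep mnm_d_basis[OF assms(2)] by (intro ext sum.cong) auto
  moreover have "hom_poly (k - 1) (\<lambda>x \<xi>. (of_nat (e b) * c e x) * mnm (e(b := e b - 1)) \<xi>)" if e: "e \<in> E" for e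
  proof (cases "e b = 0")
    case True then show ?thesis using hp_zero by simp
  next
    case False
    have "sum (e(b := e b - 1)) Basis = k - 1"
      using sum_upd[OF assms(2), of e] sum_remove[OF assms(2), of e] 1(2)[OF e] False by simp
    then show ?thesis using 1(3)[OF e] by (intro hp_term smooth_mult smooth_const)
  qed
  ultimately show ?thesis using 1(1) by (simp add: hp_sum)
qed

lemma hp_mixed:
  assumes "hom_poly k S"
  shows "pdx v (pdxi w S) x \<xi> = pdxi w (pdx v S) x \<xi>"
proof -
  obtain E c where 1: "finite E" "\<And>e. e \<in> E \<Longrightarrow> sum e Basis = k"
    "\<And>e. e \<in> E \<Longrightarrow> smooth_fun (c e)" "S = (\<lambda>x \<xi>. \<Sum>e\<in>E. c e x * mnm e \<xi>)"
    using hom_poly_rep[OF assms(1)] by blast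
  have a: "pdxi w S = (\<lambda>x \<xi>. \<Sum>e\<in>E. c e x * mnm_d e \<xi> w)"
    unfolding 1(4) by (intro ext hp_pdxi_rep)
  have b: "pdx v S = (\<lambda>x \<xi>. \<Sum>e\<in>E. frechet_derivative (c e) (at x) v * mnm e \<xi>)"
    unfolding 1(4) by (intro ext hp_pdx_rep 1(3))
  have c: "pdx v (\<lambda>x \<xi>. \<Sum>e\<in>E. c e x * mnm_d e \<xi> w) x \<xi> = (\<Sum>e\<in>E. frechet_derivative (c e) (at x) v * mnm_d e \<xi> w)"
    using hp_pdx_rep[where g="\<lambda>e \<xi>. mnm_d e \<xi> w", OF 1(3)] by simp
  show ?thesis unfolding a b hp_pdxi_rep c by simp
qed

lemma hp_euler:
  assumes "hom_poly k S"
  shows "pdxi \<xi> S x \<xi> = real k * S x \<xi>"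
proof -
  obtain E c where 1: "finite E" "\<And>e. e \<in> E \<Longrightarrow> sum e Basis = k"
    "\<And>e. e \<in> E \<Longrightarrow> smooth_fun (c e)" "S = (\<lambda>x \<xi>. \<Sum>e\<in>E. c e x * mnm e \<xi>)"
    using hom_poly_rep[OF assms(1)] by blast
  show ?thesis unfolding 1(4) hp_pdxi_rep mnm_d_euler
    by (simp add: sum_distrib_left 1(2) algebra_simps cong: sum.cong)
qed

lemma hp_deg0_pdxi:
  assumes "hom_poly 0 S" "b \<in> Basis"
  shows "pdxi b S x \<xi> = 0"
proof -
  obtain E c where 1: "finite E" "\<And>e. e \<in> E \<Longrightarrow> sum e Basis = 0"
    "\<And>e. e \<in> E \<Longrightarrow> smooth_fun (c e)" "S = (\<lambda>x \<xi>. \<Sum>e\<in>E. c e x * mnm e \<xi>)"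
    using hom_poly_rep[OF assms(1)] by blast
  have z: "e b = 0" if "e \<in> E" for e using 1(2)[OF that] sum_remove[OF assms(2), of e] by simp
  show ?thesis unfolding 1(4) hp_pdxi_rep mnm_d_basis[OF assms(2)]
    by (rule sum.neutral) (simp add: z)
qed

lemma hp_linx: "hom_poly k S \<Longrightarrow> linear (\<lambda>v. pdx v S x \<xi>)"
  using hp_hasdx has_derivative_linear by blast

lemma hp_linxi: "hom_poly k S \<Longrightarrow> linear (\<lambda>w. pdxi w S x \<xi>)"
  using hp_hasdxi has_derivative_linear by blast

lemma dq_Basis: "dq i \<in> Basis"
  by (auto simp: dq_def Basis_prod_def Basis_vec_def zero_prod_def)
lemma dp_Basis: "dp i \<in> Basis"
  unfolding dp_def Basis_prod_def zero_prod_def[symmetric]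
  by (intro UnI2 imageI UnI1) (auto simp: Basis_vec_def)
lemma dt_Basis: "dt \<in> Basis"
  unfolding dt_def Basis_prod_def
  by (intro UnI2 imageI) simp

lemma qc_inner: "qc \<xi> i = \<xi> \<bullet> dq i"
  by (simp add: qc_def dq_def inner_prod_def inner_axis)
lemma pc_inner: "pc \<xi> i = \<xi> \<bullet> dp i"
  by (simp add: pc_def dp_def inner_prod_def inner_axis)
lemma tc_inner: "tc \<xi> = \<xi> \<bullet> dt"
  by (simp add: tc_def dt_def inner_prod_def)

lemma comp_simps[simp]:
  "qc (a + b) i = qc a i + qc b i" "pc (a + b) i = pc a i + pc b i" "tc (a + b) = tc a + tc b"
  "qc (a - b) i = qc a i - qc b i" "pc (a - b) i = pc a i - pc b i" "tc (a - b) = tc a - tc b"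
  "qc (- a) i = - qc a i" "pc (- a) i = - pc a i" "tc (- a) = - tc a"
  "qc (c *\<^sub>R a) i = c * qc a i" "pc (c *\<^sub>R a) i = c * pc a i" "tc (c *\<^sub>R a) = c * tc a"
  "qc 0 i = 0" "pc 0 i = 0" "tc 0 = 0"
  by (simp_all add: qc_def pc_def tc_def)

lemma comp_basis[simp]:
  "qc (dq j) i = (if i = j then 1 else 0)" "pc (dq j) i = 0" "tc (dq j) = 0"
  "qc (dp j) i = 0" "pc (dp j) i = (if i = j then 1 else 0)" "tc (dp j) = 0"
  "qc dt i = 0" "pc dt i = 0" "tc dt = 1"
  by (simp_all add: qc_def pc_def tc_def dq_def dp_def dt_def axis_def)

lemma bl_qc: "bounded_linear (\<lambda>\<xi>. qc \<xi> i)"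
  unfolding qc_inner by (rule bounded_linear_inner_left)
lemma bl_pc: "bounded_linear (\<lambda>\<xi>. pc \<xi> i)"
  unfolding pc_inner by (rule bounded_linear_inner_left)
lemma bl_tc: "bounded_linear tc"
  unfolding tc_inner[abs_def] by (rule bounded_linear_inner_left)

lemma qc_hasd: "((\<lambda>\<xi>. qc \<xi> i) has_derivative (\<lambda>w. qc w i)) F"
  by (rule bounded_linear_imp_has_derivative[OF bl_qc])
lemma pc_hasd: "((\<lambda>\<xi>. pc \<xi> i) has_derivative (\<lambda>w. pc w i)) F"
  by (rule bounded_linear_imp_has_derivative[OF bl_pc])
lemma tc_hasd: "((\<lambda>\<xi>. tc \<xi>) has_derivative (\<lambda>w. tc w)) F"
  by (rule bounded_linear_imp_has_derivative[OF bl_tc])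

lemma pt_decomp:
  fixes z :: "'n::finite pt"
  shows "z = (\<Sum>i\<in>UNIV. qc z i *\<^sub>R dq i + pc z i *\<^sub>R dp i) + tc z *\<^sub>R dt"
proof -
  obtain a b c where z: "z = (a, b, c)" by (cases z) auto
  have 1: "(\<Sum>i\<in>UNIV. (a $ i) *\<^sub>R axis i (1::real)) = a" for a :: "real^'n"
    by (simp add: vec_eq_iff axis_def if_distrib cong: if_cong)
  show ?thesis
    unfolding z by (simp add: qc_def pc_def tc_def dq_def dp_def dt_def prod_eq_iff fst_sum snd_sum 1)
qed

lemma lin_expand:
  fixes L :: "'n::finite pt \<Rightarrow> real"
  assumes "linear L"
  shows "L z = (\<Sum>i\<in>UNIV. qc z i * L (dq i) + pc z i * L (dp i)) + tc z * L dt"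
  apply (subst pt_decomp[of z])
  using assms by (simp add: linear_add linear_sum linear_cmul)

lemma pdx_expand:
  fixes T :: "'n::finite pt \<Rightarrow> 'n pt \<Rightarrow> real"
  assumes "hom_poly k T"
  shows "pdx z T x \<xi> = (\<Sum>i\<in>UNIV. qc z i * pdx (dq i) T x \<xi> + pc z i * pdx (dp i) T x \<xi>) + tc z * pdx dt T x \<xi>"
  using lin_expand[OF hp_linx[OF assms]] .

lemma pdxi_expand:
  fixes T :: "'n::finite pt \<Rightarrow> 'n pt \<Rightarrow> real"
  assumes "hom_poly k T"
  shows "pdxi z T x \<xi> = (\<Sum>i\<in>UNIV. qc z i * pdxi (dq i) T x \<xi> + pc z i * pdxi (dp i) T x \<xi>) + tc z * pdxi dt T x \<xi>"
  using lin_expand[OF hp_linxi[OF assms]] .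

definition Vv :: "'n::finite pt \<Rightarrow> 'n pt \<Rightarrow> 'n pt" where
  "Vv x \<eta> = (\<chi> i. tc \<eta> * qc x i - pc \<eta> i, \<chi> i. qc \<eta> i + tc \<eta> * pc x i, - Es_xi x \<eta>)"
definition Ww :: "'n::finite pt \<Rightarrow> 'n pt" where
  "Ww x = (\<chi> i. pc x i, \<chi> i. - qc x i, -1)"
definition Wl :: "'n::finite pt \<Rightarrow> 'n pt" where
  "Wl v = (\<chi> i. pc v i, \<chi> i. - qc v i, 0)"

lemma Vv_comp[simp]:
  "qc (Vv x \<eta>) i = tc \<eta> * qc x i - pc \<eta> i" "pc (Vv x \<eta>) i = qc \<eta> i + tc \<eta> * pc x i"
  "tc (Vv x \<eta>) = - Es_xi x \<eta>"
  by (simp_all add: Vv_def qc_def pc_def tc_def)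
lemma Ww_comp[simp]:
  "qc (Ww x) i = pc x i" "pc (Ww x) i = - qc x i" "tc (Ww x) = -1"
  by (simp_all add: Ww_def qc_def pc_def tc_def)
lemma Wl_comp[simp]:
  "qc (Wl x) i = pc x i" "pc (Wl x) i = - qc x i" "tc (Wl x) = 0"
  by (simp_all add: Wl_def qc_def pc_def tc_def)

lemma pt_eqI:
  fixes a b :: "'n::finite pt"
  assumes "\<And>i. qc a i = qc b i" "\<And>i. pc a i = pc b i" "tc a = tc b"
  shows "a = b"
  using assms by (cases a, cases b) (auto simp: qc_def pc_def tc_def vec_eq_iff)

lemma VW0: "Vv x (Ww x) = 0"
  by (rule pt_eqI) (auto simp: Es_xi_def algebra_simps sum_negf[symmetric] simp del: sum_negf)

lemma WlV: "Wl (Vv x \<xi>) = \<xi> + tc \<xi> *\<^sub>R Ww x"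
  by (rule pt_eqI) (auto simp: algebra_simps)

lemma Dop_V:
  assumes "hom_poly k T"
  shows "Dop T x \<eta> = pdx (Vv x \<eta>) T x \<eta>"
  unfolding pdx_expand[OF assms, of "Vv x \<eta>"] Dop_def Es_def Es_xi_def Vv_comp
  by (simp add: algebra_simps sum.distrib sum_distrib_left sum_distrib_right sum_subtractf)

lemma ialpha_W:
  assumes "hom_poly k T"
  shows "ialpha T x \<xi> = 1/2 * pdxi (Ww x) T x \<xi>"
  unfolding pdxi_expand[OF assms, of "Ww x"] ialpha_def Ww_comp
  by (simp add: algebra_simps sum.distrib sum_distrib_left sum_distrib_right sum_subtractf)

lemma hp_diff: "hom_poly k S \<Longrightarrow> hom_poly k T \<Longrightarrow> hom_poly k (\<lambda>x \<xi>. S x \<xi> - T x \<xi>)"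
  using hp_add[of k S "\<lambda>x \<xi>. (-1) * T x \<xi>"] hp_scal[of k T "-1"] by simp

lemma smooth_pc: "smooth_fun (\<lambda>x. pc x i)" by (rule smooth_linear[OF bl_pc])
lemma smooth_qc: "smooth_fun (\<lambda>x. qc x i)" by (rule smooth_linear[OF bl_qc])

lemma hp_qcm: "hom_poly k T \<Longrightarrow> hom_poly (Suc k) (\<lambda>x \<xi>. qc \<xi> i * T x \<xi>)"
  unfolding qc_inner by (rule hp_ximult[OF _ dq_Basis])
lemma hp_pcm: "hom_poly k T \<Longrightarrow> hom_poly (Suc k) (\<lambda>x \<xi>. pc \<xi> i * T x \<xi>)"
  unfolding pc_inner by (rule hp_ximult[OF _ dp_Basis])
lemma hp_tcm: "hom_poly k T \<Longrightarrow> hom_poly (Suc k) (\<lambda>x \<xi>. tc \<xi> * T x \<xi>)"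
  unfolding tc_inner by (rule hp_ximult[OF _ dt_Basis])

lemma hp_ialpha:
  assumes "hom_poly k S"
  shows "hom_poly (k - 1) (ialpha S)"
  unfolding ialpha_def
  by (intro hp_scal hp_diff hp_sum hp_xmult smooth_pc smooth_qc hp_pdxi[OF assms] dq_Basis dp_Basis dt_Basis finite)

lemma hp_Es:
  assumes "hom_poly k S"
  shows "hom_poly k (Es S)"
  unfolding Es_def
  by (intro hp_add hp_sum hp_xmult smooth_pc smooth_qc hp_pdx[OF assms] finite)

lemma Xop_alt:
  fixes S :: "'n::finite pt \<Rightarrow> 'n pt \<Rightarrow> real"
  shows "Xop \<delta> k S = (\<lambda>x \<xi>. (\<Sum>i\<in>UNIV. qc \<xi> i * pdx (dp i) S x \<xi> - pc \<xi> i * pdx (dq i) S x \<xi>)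
     + tc \<xi> * Es S x \<xi>
     - (\<Sum>i\<in>UNIV. pc x i * (pc \<xi> i * pdx dt S x \<xi>) + qc x i * (qc \<xi> i * pdx dt S x \<xi>))
     + (2 * (real CARD('n) + 1) * \<delta> + real k) * (tc \<xi> * S x \<xi>))"
  unfolding Xop_def Dop_def Es_xi_def
  by (intro ext) (simp add: sum_distrib_right sum_distrib_left algebra_simps)

lemma hp_Xop:
  assumes "hom_poly k S"
  shows "hom_poly (Suc k) (Xop \<delta> k S)"
  unfolding Xop_alt
  by (intro hp_add hp_diff hp_sum hp_scal hp_xmult hp_qcm hp_pcm hp_tcm smooth_pc smooth_qc
      hp_Es hp_pdx[OF assms] assms finite)

lemma hp_pdxi_gen:
  fixes S :: "'n::finite pt \<Rightarrow> 'n pt \<Rightarrow> real"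
  assumes "hom_poly k S"
  shows "hom_poly (k - 1) (pdxi w S)"
proof -
  have e: "pdxi w S = (\<lambda>x \<xi>. (\<Sum>i\<in>UNIV. qc w i * pdxi (dq i) S x \<xi> + pc w i * pdxi (dp i) S x \<xi>) + tc w * pdxi dt S x \<xi>)"
    by (intro ext pdxi_expand[OF assms])
  have "hom_poly (k - 1) (\<lambda>x \<xi>. (\<Sum>i\<in>UNIV. qc w i * pdxi (dq i) S x \<xi> + pc w i * pdxi (dp i) S x \<xi>) + tc w * pdxi dt S x \<xi>)"
    by (intro hp_add hp_sum hp_scal hp_pdxi[OF assms] dq_Basis dp_Basis dt_Basis finite)
  then show ?thesis unfolding e .
qed

lemma pdx_lin:
  assumes "hom_poly a S" "hom_poly b T"
  shows "pdx v (\<lambda>x \<xi>. \<alpha> * S x \<xi> + \<beta> * T x \<xi>) x \<xi> = \<alpha> * pdx v S x \<xi> + \<beta> * pdx v T x \<xi>"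
proof -
  have "((\<lambda>y. \<alpha> * S y \<xi> + \<beta> * T y \<xi>) has_derivative (\<lambda>v. \<alpha> * pdx v S x \<xi> + \<beta> * pdx v T x \<xi>)) (at x)"
    by (intro has_derivative_add has_derivative_mult_right hp_hasdx[OF assms(1)] hp_hasdx[OF assms(2)])
  then show ?thesis unfolding pdx_def[of v "\<lambda>x \<xi>. \<alpha> * S x \<xi> + \<beta> * T x \<xi>"] by (rule fd_at)
qed

lemma pdxi_lin:
  assumes "hom_poly a S" "hom_poly b T"
  shows "pdxi v (\<lambda>x \<xi>. \<alpha> * S x \<xi> + \<beta> * T x \<xi>) x \<xi> = \<alpha> * pdxi v S x \<xi> + \<beta> * pdxi v T x \<xi>"
proof -
  have "((\<lambda>y. \<alpha> * S x y + \<beta> * T x y) has_derivative (\<lambda>v. \<alpha> * pdxi v S x \<xi> + \<beta> * pdxi v T x \<xi>)) (at \<xi>)"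
    by (intro has_derivative_add has_derivative_mult_right hp_hasdxi[OF assms(1)] hp_hasdxi[OF assms(2)])
  then show ?thesis unfolding pdxi_def[of v "\<lambda>x \<xi>. \<alpha> * S x \<xi> + \<beta> * T x \<xi>"] by (rule fd_at)
qed

lemma ialpha_lin:
  assumes "hom_poly a S" "hom_poly b T"
  shows "ialpha (\<lambda>x \<xi>. \<alpha> * S x \<xi> + \<beta> * T x \<xi>) = (\<lambda>x \<xi>. \<alpha> * ialpha S x \<xi> + \<beta> * ialpha T x \<xi>)"
  unfolding ialpha_def pdxi_lin[OF assms]
  by (intro ext) (simp add: algebra_simps sum.distrib sum_distrib_left sum_subtractf)

lemma Xop_lin:
  assumes "hom_poly a S" "hom_poly b T"
  shows "Xop \<delta> j (\<lambda>x \<xi>. \<alpha> * S x \<xi> + \<beta> * T x \<xi>) = (\<lambda>x \<xi>. \<alpha> * Xop \<delta> j S x \<xi> + \<beta> * Xop \<delta> j T x \<xi>)"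
  unfolding Xop_def Dop_def Es_def pdx_lin[OF assms]
  by (intro ext) (simp add: algebra_simps sum.distrib sum_distrib_left sum_subtractf)

lemma ialpha_deg0:
  assumes "hom_poly 0 S"
  shows "ialpha S = (\<lambda>x \<xi>. 0)"
  unfolding ialpha_def
  by (simp add: hp_deg0_pdxi[OF assms] dq_Basis dp_Basis dt_Basis)

lemma Xop_pdxi:
  fixes S :: "'n::finite pt \<Rightarrow> 'n pt \<Rightarrow> real"
  assumes S: "hom_poly j S"
  shows "pdxi w (Xop \<delta> j S) x \<xi> = pdx (Vv x w) S x \<xi> + pdx (Vv x \<xi>) (pdxi w S) x \<xi>
     + (2 * (real CARD('n) + 1) * \<delta> + real j) * (tc w * S x \<xi> + tc \<xi> * pdxi w S x \<xi>)"
proof -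
  have "((\<lambda>\<eta>. Xop \<delta> j S x \<eta>) has_derivative (\<lambda>w. pdx (Vv x w) S x \<xi> + pdx (Vv x \<xi>) (pdxi w S) x \<xi>
     + (2 * (real CARD('n) + 1) * \<delta> + real j) * (tc w * S x \<xi> + tc \<xi> * pdxi w S x \<xi>))) (at \<xi>)"
    unfolding Xop_def Dop_def Es_def Es_xi_def
    apply (rule has_derivative_eq_rhs)
     apply (rule has_derivative_add has_derivative_diff has_derivative_sum has_derivative_mult
        has_derivative_const qc_hasd pc_hasd tc_hasd hp_hasdxi[OF hp_pdx[OF S]] hp_hasdxi[OF S])+
    apply (rule ext)
    apply (simp only: pdx_expand[OF S, of "Vv x _"] pdx_expand[OF hp_pdxi_gen[OF S], of "Vv x \<xi>"])
    apply (simp only: hp_mixed[OF S] Vv_comp Es_xi_def)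
    apply (simp add: algebra_simps sum.distrib sum_distrib_left sum_distrib_right sum_subtractf)
    done
  then show ?thesis unfolding pdxi_def[of w "Xop \<delta> j S"] by (rule fd_at)
qed

lemma ialpha_pdx:
  fixes S :: "'n::finite pt \<Rightarrow> 'n pt \<Rightarrow> real"
  assumes S: "hom_poly k S"
  shows "pdx v (ialpha S) x \<xi> = 1/2 * (pdxi (Wl v) S x \<xi> + pdxi (Ww x) (pdx v S) x \<xi>)"
proof -
  have "((\<lambda>y. ialpha S y \<xi>) has_derivative (\<lambda>v. 1/2 * (pdxi (Wl v) S x \<xi> + pdxi (Ww x) (pdx v S) x \<xi>))) (at x)"
    unfolding ialpha_def
    apply (rule has_derivative_eq_rhs)
     apply (rule has_derivative_add has_derivative_diff has_derivative_sum has_derivative_mult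
        has_derivative_const qc_hasd pc_hasd tc_hasd hp_hasdx[OF hp_pdxi_gen[OF S]])+
    apply (rule ext)
    apply (simp only: pdxi_expand[OF S, of "Wl _"] pdxi_expand[OF hp_pdx[OF S], of "Ww x"]
        hp_mixed[OF S] Wl_comp Ww_comp)
    apply (simp add: algebra_simps sum.distrib sum_distrib_left sum_distrib_right sum_subtractf)
    done
  then show ?thesis unfolding pdx_def[of v "ialpha S"] by (rule fd_at)
qed

lemma comm_pt:
  fixes S :: "'n::finite pt \<Rightarrow> 'n pt \<Rightarrow> real"
  assumes S: "hom_poly j S"
  shows "ialpha (Xop \<delta> j S) x \<xi> = Dop (ialpha S) x \<xi>
    + (2 * (real CARD('n) + 1) * \<delta> + real j - 1) * tc \<xi> * ialpha S x \<xi>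
    - ((real CARD('n) + 1) * \<delta> + real j) * S x \<xi>"
proof -
  define c where "c = 2 * (real CARD('n) + 1) * \<delta> + real j"
  define pW where "pW = pdxi (Ww x) S x \<xi>"
  define P where "P = pdxi (Ww x) (pdx (Vv x \<xi>) S) x \<xi>"
  have L: "ialpha (Xop \<delta> j S) x \<xi> = 1/2 * (P + c * (- S x \<xi> + tc \<xi> * pW))"
  proof -
    have "pdx (Vv x (Ww x)) S x \<xi> = 0"
      unfolding VW0 using linear_0[OF hp_linx[OF S]] by simp
    then show ?thesis
      unfolding ialpha_W[OF hp_Xop[OF S]] Xop_pdxi[OF S] P_def pW_def c_def hp_mixed[OF S, symmetric]
      by simp
  qed
  have "pdxi (Wl (Vv x \<xi>)) S x \<xi> = real j * S x \<xi> + tc \<xi> * pW"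
    unfolding WlV pW_def hp_euler[OF S, symmetric]
    using linear_add[OF hp_linxi[OF S]] linear_cmul[OF hp_linxi[OF S]] by simp
  then have R: "Dop (ialpha S) x \<xi> = 1/2 * (real j * S x \<xi> + tc \<xi> * pW + P)"
    unfolding Dop_V[OF hp_ialpha[OF S]] ialpha_pdx[OF S] P_def by simp
  have I: "ialpha S x \<xi> = 1/2 * pW" unfolding pW_def by (rule ialpha_W[OF S])
  show ?thesis unfolding L R I c_def[symmetric]
    by (simp add: c_def algebra_simps)
qed

definition mu :: "nat \<Rightarrow> real \<Rightarrow> nat \<Rightarrow> real" where
  "mu n \<delta> j = - ((real n + 1) * \<delta> + real j)"

lemma comm:
  fixes S :: "'n::finite pt \<Rightarrow> 'n pt \<Rightarrow> real"
  assumes S: "hom_poly j S"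
  shows "ialpha (Xop \<delta> j S) = (\<lambda>x \<xi>. Xop \<delta> (j - 1) (ialpha S) x \<xi> + mu CARD('n) \<delta> j * S x \<xi>)"
proof (intro ext)
  fix x \<xi>
  show "ialpha (Xop \<delta> j S) x \<xi> = Xop \<delta> (j - 1) (ialpha S) x \<xi> + mu CARD('n) \<delta> j * S x \<xi>"
  proof (cases "j = 0")
    case True
    from S True have "hom_poly 0 S" by simp
    then have "ialpha S x \<xi> = 0" by (simp add: ialpha_deg0)
    then show ?thesis by (subst comm_pt[OF S]) (simp add: Xop_def mu_def algebra_simps)
  next
    case False
    then have "real (j - 1) = real j - 1" by simp
    then show ?thesis by (subst comm_pt[OF S]) (simp add: Xop_def mu_def algebra_simps)
  qed
qed

lemma hp_ipow: "hom_poly k S \<Longrightarrow> hom_poly (k - m) ((ialpha ^^ m) S)"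
proof (induction m)
  case 0 then show ?case by simp
next
  case (Suc m)
  have "hom_poly (k - m - 1) (ialpha ((ialpha ^^ m) S))" by (rule hp_ialpha[OF Suc.IH[OF Suc.prems]])
  moreover have "k - m - 1 = k - Suc m" by simp
  ultimately show ?case by simp
qed

lemma ipow_lin:
  assumes "hom_poly a S" "hom_poly b T"
  shows "(ialpha ^^ m) (\<lambda>x \<xi>. \<alpha> * S x \<xi> + \<beta> * T x \<xi>) = (\<lambda>x \<xi>. \<alpha> * (ialpha ^^ m) S x \<xi> + \<beta> * (ialpha ^^ m) T x \<xi>)"
proof (induction m)
  case 0 then show ?case by simp
next
  case (Suc m)
  show ?case using ialpha_lin[OF hp_ipow[OF assms(1), of m] hp_ipow[OF assms(2), of m], of \<alpha> \<beta>] Suc by simp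
qed

lemma ialpha_zero: "ialpha (\<lambda>x \<xi>. 0) = (\<lambda>x \<xi>. 0)"
  by (rule ialpha_deg0[OF hp_zero])

lemma ipow_zero: "(ialpha ^^ m) (\<lambda>x \<xi>. 0) = (\<lambda>x \<xi>. 0)"
  by (induction m) (simp_all add: ialpha_zero)

lemma Xop_zero: "Xop \<delta> j (\<lambda>x \<xi>. 0) = (\<lambda>x \<xi>. 0)"
  using Xop_lin[OF hp_zero hp_zero, of \<delta> j 0 0] by simp

definition sig :: "nat \<Rightarrow> real \<Rightarrow> nat \<Rightarrow> nat \<Rightarrow> real" where
  "sig n \<delta> d m = (\<Sum>s<m. mu n \<delta> (d - s))"

lemma iter_comm:
  fixes S :: "'n::finite pt \<Rightarrow> 'n pt \<Rightarrow> real"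
  assumes S: "hom_poly d S"
  shows "(ialpha ^^ m) (Xop \<delta> d S) = (\<lambda>x \<xi>. Xop \<delta> (d - m) ((ialpha ^^ m) S) x \<xi> + sig CARD('n) \<delta> d m * (ialpha ^^ (m - 1)) S x \<xi>)"
proof (induction m)
  case 0 then show ?case by (simp add: sig_def)
next
  case (Suc m)
  define A where "A = Xop \<delta> (d - m) ((ialpha ^^ m) S)"
  define B where "B = (ialpha ^^ (m - 1)) S"
  define s where "s = sig CARD('n) \<delta> d m"
  have hA: "hom_poly (Suc (d - m)) A" unfolding A_def by (intro hp_Xop hp_ipow S)
  have hB: "hom_poly (d - (m - 1)) B" unfolding B_def by (intro hp_ipow S)
  have e0: "(ialpha ^^ Suc m) (Xop \<delta> d S) = ialpha (\<lambda>x \<xi>. 1 * A x \<xi> + s * B x \<xi>)"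
    unfolding funpow.simps comp_apply Suc.IH A_def B_def s_def mult_1 ..
  have e1: "ialpha (\<lambda>x \<xi>. 1 * A x \<xi> + s * B x \<xi>) = (\<lambda>x \<xi>. 1 * ialpha A x \<xi> + s * ialpha B x \<xi>)"
    by (rule ialpha_lin[OF hA hB])
  have e2: "ialpha A = (\<lambda>x \<xi>. Xop \<delta> (d - Suc m) ((ialpha ^^ Suc m) S) x \<xi> + mu CARD('n) \<delta> (d - m) * (ialpha ^^ m) S x \<xi>)"
  proof -
    have dd: "d - m - 1 = d - Suc m" by simp
    show ?thesis unfolding A_def comm[OF hp_ipow[OF S]] dd funpow.simps comp_apply ..
  qed
  have e3: "s * ialpha B x \<xi> = s * (ialpha ^^ m) S x \<xi>" for x \<xi>
  proof (cases m)
    case 0 then show ?thesis by (simp add: s_def sig_def)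
  next
    case (Suc m') then show ?thesis by (simp add: B_def)
  qed
  have e4: "sig CARD('n) \<delta> d (Suc m) = s + mu CARD('n) \<delta> (d - m)"
    by (simp add: s_def sig_def)
  show ?case unfolding e0 e1 e2 e4
    apply (intro ext)
    apply (subst e3)
    apply (simp add: algebra_simps)
    done
qed

lemma sig_closed:
  "m \<le> Suc d \<Longrightarrow> sig n \<delta> d m = - (real m * (real n + 1) * \<delta> + real m * real d - real m * (real m - 1) / 2)"
proof (induction m)
  case 0 then show ?case by (simp add: sig_def)
next
  case (Suc m)
  then have md: "m \<le> d" by simp
  have "sig n \<delta> d (Suc m) = sig n \<delta> d m + mu n \<delta> (d - m)" by (simp add: sig_def)
  also have "\<dots> = - (real m * (real n + 1) * \<delta> + real m * real d - real m * (real m - 1) / 2) - ((real n + 1) * \<delta> + (real d - real m))"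
    using Suc md by (simp add: mu_def of_nat_diff)
  finally show ?case by (simp add: algebra_simps add_divide_distrib diff_divide_distrib)
qed

lemma rr_sig:
  assumes "1 \<le> k" "1 \<le> l" "l \<le> k + 1"
  shows "rr n \<delta> (l - 1) (k + 1 - l) = sig n \<delta> (k - 1) (l - 1)"
proof -
  have "sig n \<delta> (k - 1) (l - 1) = - (real (l - 1) * (real n + 1) * \<delta> + real (l - 1) * real (k - 1) - real (l - 1) * (real (l - 1) - 1) / 2)"
    using assms by (intro sig_closed) simp
  also have "\<dots> = rr n \<delta> (l - 1) (k + 1 - l)"
    using assms by (simp add: rr_def of_nat_diff field_simps)
  finally show ?thesis by simp
qed

lemma ipow_kill:
  assumes h: "hom_poly k S"
  shows "(ialpha ^^ Suc k) S = (\<lambda>x \<xi>. 0)"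
proof -
  have "hom_poly 0 ((ialpha ^^ k) S)" using hp_ipow[OF h, of k] by simp
  then have "ialpha ((ialpha ^^ k) S) = (\<lambda>x \<xi>. 0)" by (rule ialpha_deg0)
  then show ?thesis by simp
qed

lemma Fsp_iff: "u \<in> Fsp k l \<longleftrightarrow> hom_poly k u \<and> (ialpha ^^ l) u = (\<lambda>x \<xi>. 0)"
  by (simp add: Fsp_def Rsp_def)

lemma Fsp_zero: "(\<lambda>x \<xi>. 0) \<in> Fsp k l"
  by (simp add: Fsp_iff hp_zero ipow_zero)

lemma Fsp_lin:
  assumes "u \<in> Fsp k l" "v \<in> Fsp k l"
  shows "(\<lambda>x \<xi>. \<alpha> * u x \<xi> + \<beta> * v x \<xi>) \<in> Fsp k l"
proof -
  have hu: "hom_poly k u" and hv: "hom_poly k v" and zu: "(ialpha ^^ l) u = (\<lambda>x \<xi>. 0)" and zv: "(ialpha ^^ l) v = (\<lambda>x \<xi>. 0)"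
    using assms by (simp_all add: Fsp_iff)
  have h: "hom_poly k (\<lambda>x \<xi>. \<alpha> * u x \<xi> + \<beta> * v x \<xi>)" by (intro hp_add hp_scal hu hv)
  have "(ialpha ^^ l) (\<lambda>x \<xi>. \<alpha> * u x \<xi> + \<beta> * v x \<xi>) = (\<lambda>x \<xi>. \<alpha> * (ialpha ^^ l) u x \<xi> + \<beta> * (ialpha ^^ l) v x \<xi>)"
    by (rule ipow_lin[OF hu hv])
  also have "\<dots> = (\<lambda>x \<xi>. 0)" unfolding zu zv by simp
  finally show ?thesis using h by (simp add: Fsp_iff)
qed

lemma Fsp_add: "u \<in> Fsp k l \<Longrightarrow> v \<in> Fsp k l \<Longrightarrow> (\<lambda>x \<xi>. u x \<xi> + v x \<xi>) \<in> Fsp k l"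
proof -
  assume a: "u \<in> Fsp k l" "v \<in> Fsp k l"
  have e: "(\<lambda>x \<xi>. u x \<xi> + v x \<xi>) = (\<lambda>x \<xi>. 1 * u x \<xi> + 1 * v x \<xi>)" by simp
  show ?thesis unfolding e by (rule Fsp_lin[OF a])
qed

lemma Fsp_scal: "u \<in> Fsp k l \<Longrightarrow> (\<lambda>x \<xi>. c * u x \<xi>) \<in> Fsp k l"
proof -
  assume a: "u \<in> Fsp k l"
  have e: "(\<lambda>x \<xi>. c * u x \<xi>) = (\<lambda>x \<xi>. c * u x \<xi> + 0 * u x \<xi>)" by simp
  show ?thesis unfolding e by (rule Fsp_lin[OF a a])
qed

lemma Fsp_diff: "u \<in> Fsp k l \<Longrightarrow> v \<in> Fsp k l \<Longrightarrow> (\<lambda>x \<xi>. u x \<xi> - v x \<xi>) \<in> Fsp k l"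
proof -
  assume a: "u \<in> Fsp k l" "v \<in> Fsp k l"
  have e: "(\<lambda>x \<xi>. u x \<xi> - v x \<xi>) = (\<lambda>x \<xi>. 1 * u x \<xi> + (-1) * v x \<xi>)" by simp
  show ?thesis unfolding e by (rule Fsp_lin[OF a])
qed

lemma Fsp0: "u \<in> Fsp k 0 \<Longrightarrow> u = (\<lambda>x \<xi>. 0)"
  by (simp add: Fsp_iff)

lemma Fsp_hp: "u \<in> Fsp k l \<Longrightarrow> hom_poly k u"
  by (simp add: Fsp_iff)

lemma Fsp_ialpha:
  assumes "u \<in> Fsp k m"
  shows "ialpha u \<in> Fsp (k - 1) (m - 1)"
proof (cases m)
  case 0
  then have "u = (\<lambda>x \<xi>. 0)" using Fsp0 assms by blast
  then show ?thesis by (simp add: ialpha_zero Fsp_zero)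
next
  case (Suc m')
  have hu: "hom_poly k u" and zu: "(ialpha ^^ m) u = (\<lambda>x \<xi>. 0)" using assms by (simp_all add: Fsp_iff)
  have "(ialpha ^^ m') (ialpha u) = (ialpha ^^ m) u" unfolding Suc funpow_Suc_right by simp
  then show ?thesis unfolding Fsp_iff using hp_ialpha[OF hu] zu Suc by simp
qed

lemma Fsp_Xop:
  fixes v :: "'n::finite pt \<Rightarrow> 'n pt \<Rightarrow> real"
  assumes "v \<in> Fsp (k - 1) m" "1 \<le> k"
  shows "Xop \<delta> (k - 1) v \<in> Fsp k (Suc m)"
proof -
  have hv: "hom_poly (k - 1) v" using assms Fsp_hp by blast
  have "hom_poly (Suc (k - 1)) (Xop \<delta> (k - 1) v)" by (rule hp_Xop[OF hv])
  then have h: "hom_poly k (Xop \<delta> (k - 1) v)" using assms by simp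
  have z: "(ialpha ^^ m) v = (\<lambda>x \<xi>. 0)" using assms Fsp_iff by blast
  have "(ialpha ^^ Suc m) v = (\<lambda>x \<xi>. 0)" using z by (simp add: ialpha_zero)
  then show ?thesis unfolding Fsp_iff using h iter_comm[OF hv, of "Suc m" \<delta>] z by (simp add: Xop_zero)
qed

lemma equiv_gr: "equiv (Fsp k l) (grrel k l)"
proof (rule equivI)
  show "grrel k l \<subseteq> Fsp k l \<times> Fsp k l" by (auto simp: grrel_def)
  show "refl_on (Fsp k l) (grrel k l)"
    unfolding refl_on_def grrel_def using Fsp_zero by auto
  show "sym (grrel k l)"
  proof (rule symI)
    fix a b assume "(a, b) \<in> grrel k l"
    then have "a \<in> Fsp k l" "b \<in> Fsp k l" "(\<lambda>x \<xi>. a x \<xi> - b x \<xi>) \<in> Fsp k (l - 1)" by (auto simp: grrel_def)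
    moreover have "(\<lambda>x \<xi>. b x \<xi> - a x \<xi>) = (\<lambda>x \<xi>. (-1) * (a x \<xi> - b x \<xi>))" by simp
    ultimately have "(\<lambda>x \<xi>. b x \<xi> - a x \<xi>) \<in> Fsp k (l - 1)"
      using Fsp_scal[of "\<lambda>x \<xi>. a x \<xi> - b x \<xi>" k "l - 1" "-1"] by metis
    then show "(b, a) \<in> grrel k l" unfolding grrel_def using \<open>a \<in> Fsp k l\<close> \<open>b \<in> Fsp k l\<close> by blast
  qed
  show "trans (grrel k l)"
  proof (rule transI)
    fix a b c assume "(a, b) \<in> grrel k l" "(b, c) \<in> grrel k l"
    then have "a \<in> Fsp k l" "c \<in> Fsp k l" "(\<lambda>x \<xi>. a x \<xi> - b x \<xi>) \<in> Fsp k (l - 1)" "(\<lambda>x \<xi>. b x \<xi> - c x \<xi>) \<in> Fsp k (l - 1)"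
      by (auto simp: grrel_def)
    moreover have "(\<lambda>x \<xi>. a x \<xi> - c x \<xi>) = (\<lambda>x \<xi>. (a x \<xi> - b x \<xi>) + (b x \<xi> - c x \<xi>))" by simp
    ultimately have "(\<lambda>x \<xi>. a x \<xi> - c x \<xi>) \<in> Fsp k (l - 1)"
      using Fsp_add[of "\<lambda>x \<xi>. a x \<xi> - b x \<xi>" k "l - 1" "\<lambda>x \<xi>. b x \<xi> - c x \<xi>"] by metis
    then show "(a, c) \<in> grrel k l" unfolding grrel_def using \<open>a \<in> Fsp k l\<close> \<open>c \<in> Fsp k l\<close> by blast
  qed
qed

lemma cls_in_gr: "u \<in> Fsp k l \<Longrightarrow> cls k l u \<in> gr k l"
  unfolding cls_def gr_def by (rule quotientI)

lemma cls_eq: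
  assumes "u \<in> Fsp k l" "v \<in> Fsp k l" "(\<lambda>x \<xi>. u x \<xi> - v x \<xi>) \<in> Fsp k (l - 1)"
  shows "cls k l u = cls k l v"
  unfolding cls_def using assms
  by (subst eq_equiv_class_iff[OF equiv_gr]) (auto simp: grrel_def)

lemma rep_cls:
  assumes "u \<in> Fsp k l"
  shows "rep (cls k l u) \<in> Fsp k l \<and> (\<lambda>x \<xi>. u x \<xi> - rep (cls k l u) x \<xi>) \<in> Fsp k (l - 1)"
proof -
  have "u \<in> cls k l u" unfolding cls_def by (rule equiv_class_self[OF equiv_gr assms])
  then have "rep (cls k l u) \<in> cls k l u" unfolding rep_def by (rule someI[where P="\<lambda>w. w \<in> cls k l u"])
  then show ?thesis unfolding cls_def grrel_def by auto
qed

lemma gr_rep: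
  assumes "C \<in> gr k l"
  shows "rep C \<in> Fsp k l" "C = cls k l (rep C)"
proof -
  obtain u where u: "C = cls k l u" "u \<in> Fsp k l"
    using assms unfolding gr_def cls_def by (auto elim: quotientE)
  show "rep C \<in> Fsp k l" using rep_cls[OF u(2)] u(1) by simp
  have "cls k l u = cls k l (rep C)"
    using rep_cls[OF u(2)] u by (intro cls_eq) auto
  then show "C = cls k l (rep C)" using u by simp
qed

lemma mem_cls: "w \<in> cls k l u \<longleftrightarrow> u \<in> Fsp k l \<and> w \<in> Fsp k l \<and> (\<lambda>x \<xi>. u x \<xi> - w x \<xi>) \<in> Fsp k (l - 1)"
  by (simp add: cls_def grrel_def)

lemma ialpha_diff:
  assumes "hom_poly a u" "hom_poly b w"
  shows "ialpha (\<lambda>x \<xi>. u x \<xi> - w x \<xi>) = (\<lambda>x \<xi>. ialpha u x \<xi> - ialpha w x \<xi>)"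
proof -
  have e: "(\<lambda>x \<xi>. u x \<xi> - w x \<xi>) = (\<lambda>x \<xi>. 1 * u x \<xi> + (-1) * w x \<xi>)" by simp
  show ?thesis unfolding e ialpha_lin[OF assms] by simp
qed

lemma Xop_diff:
  assumes "hom_poly a u" "hom_poly b w"
  shows "Xop \<delta> j (\<lambda>x \<xi>. u x \<xi> - w x \<xi>) = (\<lambda>x \<xi>. Xop \<delta> j u x \<xi> - Xop \<delta> j w x \<xi>)"
proof -
  have e: "(\<lambda>x \<xi>. u x \<xi> - w x \<xi>) = (\<lambda>x \<xi>. 1 * u x \<xi> + (-1) * w x \<xi>)" by simp
  show ?thesis unfolding e Xop_lin[OF assms] by simp
qed

lemma ipow_diff:
  assumes "hom_poly a u" "hom_poly b w"
  shows "(ialpha ^^ m) (\<lambda>x \<xi>. u x \<xi> - c * w x \<xi>) = (\<lambda>x \<xi>. (ialpha ^^ m) u x \<xi> - c * (ialpha ^^ m) w x \<xi>)"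
proof -
  have e: "(\<lambda>x \<xi>. u x \<xi> - c * w x \<xi>) = (\<lambda>x \<xi>. 1 * u x \<xi> + (- c) * w x \<xi>)" by simp
  show ?thesis unfolding e ipow_lin[OF assms] by simp
qed

lemma Fsp_neg_diff: "(\<lambda>x \<xi>. u x \<xi> - w x \<xi>) \<in> Fsp k l \<Longrightarrow> (\<lambda>x \<xi>. w x \<xi> - u x \<xi>) \<in> Fsp k l"
proof -
  assume a: "(\<lambda>x \<xi>. u x \<xi> - w x \<xi>) \<in> Fsp k l"
  have e: "(\<lambda>x \<xi>. w x \<xi> - u x \<xi>) = (\<lambda>x \<xi>. (-1) * (u x \<xi> - w x \<xi>))" by simp
  show ?thesis unfolding e by (rule Fsp_scal[OF a])
qed

lemma Fsp_Xop':
  fixes v :: "'n::finite pt \<Rightarrow> 'n pt \<Rightarrow> real"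
  assumes "v \<in> Fsp (k - 1) (m - 1)" "1 \<le> k"
  shows "Xop \<delta> (k - 1) v \<in> Fsp k m"
proof (cases m)
  case 0
  then have "v = (\<lambda>x \<xi>. 0)" using assms Fsp0 by simp
  then show ?thesis by (simp add: Xop_zero Fsp_zero)
next
  case (Suc m')
  then show ?thesis using Fsp_Xop[of v k m' \<delta>] assms by simp
qed

lemma K4:
  fixes u :: "'n::finite pt \<Rightarrow> 'n pt \<Rightarrow> real"
  assumes u: "u \<in> Fsp k (Suc l')" and k: "1 \<le> k"
  shows "(\<lambda>x \<xi>. Xop \<delta> (k - 1) (ialpha u) x \<xi> - sig CARD('n) \<delta> (k - 1) l' * u x \<xi>) \<in> Fsp k l'"
proof -
  define s where "s = sig CARD('n) \<delta> (k - 1) l'"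
  have hu: "hom_poly k u" and zu: "(ialpha ^^ Suc l') u = (\<lambda>x \<xi>. 0)" using u by (simp_all add: Fsp_iff)
  have hi: "hom_poly (k - 1) (ialpha u)" by (rule hp_ialpha[OF hu])
  have hX: "hom_poly k (Xop \<delta> (k - 1) (ialpha u))" using hp_Xop[OF hi, of \<delta>] k by simp
  have h: "hom_poly k (\<lambda>x \<xi>. Xop \<delta> (k - 1) (ialpha u) x \<xi> - s * u x \<xi>)"
    by (intro hp_diff hp_scal hX hu)
  have a: "(ialpha ^^ l') (ialpha u) = (\<lambda>x \<xi>. 0)"
    using zu unfolding funpow_Suc_right comp_def by simp
  have b: "s * (ialpha ^^ (l' - 1)) (ialpha u) x \<xi> = s * (ialpha ^^ l') u x \<xi>" for x \<xi>
  proof (cases l')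
    case 0 then show ?thesis by (simp add: s_def sig_def)
  next
    case (Suc l'')
    have "(ialpha ^^ l'') (ialpha u) = (ialpha ^^ l') u" unfolding Suc funpow_Suc_right comp_def ..
    then show ?thesis using Suc by simp
  qed
  have "(ialpha ^^ l') (\<lambda>x \<xi>. Xop \<delta> (k - 1) (ialpha u) x \<xi> - s * u x \<xi>)
      = (\<lambda>x \<xi>. (ialpha ^^ l') (Xop \<delta> (k - 1) (ialpha u)) x \<xi> - s * (ialpha ^^ l') u x \<xi>)"
    by (rule ipow_diff[OF hX hu])
  also have "\<dots> = (\<lambda>x \<xi>. 0)"
    unfolding iter_comm[OF hi] a Xop_zero s_def[symmetric]
    apply (intro ext)
    apply (subst b)
    apply simp
    done
  finally show ?thesis using h unfolding Fsp_iff s_def by simp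
qed

lemma K5:
  fixes v :: "'n::finite pt \<Rightarrow> 'n pt \<Rightarrow> real"
  assumes v: "v \<in> Fsp (k - 1) l'"
  shows "(\<lambda>x \<xi>. ialpha (Xop \<delta> (k - 1) v) x \<xi> - sig CARD('n) \<delta> (k - 1) l' * v x \<xi>) \<in> Fsp (k - 1) (l' - 1)"
proof (cases l')
  case 0
  then have "v = (\<lambda>x \<xi>. 0)" using v Fsp0 by simp
  then show ?thesis by (simp add: Xop_zero ialpha_zero Fsp_zero)
next
  case (Suc l'')
  define s where "s = sig CARD('n) \<delta> (k - 1) l'"
  have hv: "hom_poly (k - 1) v" and zv: "(ialpha ^^ l') v = (\<lambda>x \<xi>. 0)" using v by (simp_all add: Fsp_iff)
  have hX: "hom_poly (Suc (k - 1)) (Xop \<delta> (k - 1) v)" by (rule hp_Xop[OF hv])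
  have hiX: "hom_poly (k - 1) (ialpha (Xop \<delta> (k - 1) v))" using hp_ialpha[OF hX] by simp
  have h: "hom_poly (k - 1) (\<lambda>x \<xi>. ialpha (Xop \<delta> (k - 1) v) x \<xi> - s * v x \<xi>)"
    by (intro hp_diff hp_scal hiX hv)
  have c: "(ialpha ^^ l'') (ialpha (Xop \<delta> (k - 1) v)) = (ialpha ^^ l') (Xop \<delta> (k - 1) v)"
    unfolding Suc funpow_Suc_right comp_def ..
  have "(ialpha ^^ l'') (\<lambda>x \<xi>. ialpha (Xop \<delta> (k - 1) v) x \<xi> - s * v x \<xi>)
      = (\<lambda>x \<xi>. (ialpha ^^ l'') (ialpha (Xop \<delta> (k - 1) v)) x \<xi> - s * (ialpha ^^ l'') v x \<xi>)"
    by (rule ipow_diff[OF hiX hv])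
  also have "\<dots> = (\<lambda>x \<xi>. 0)"
    unfolding c iter_comm[OF hv] zv Xop_zero s_def[symmetric] using Suc by simp
  finally show ?thesis using h unfolding Fsp_iff s_def Suc by simp
qed

lemma scls_in: "C \<in> gr k l \<Longrightarrow> scls k l c C \<in> gr k l"
  unfolding scls_def by (intro cls_in_gr Fsp_scal gr_rep)

lemma scls_1: "C \<in> gr k l \<Longrightarrow> scls k l 1 C = C"
  unfolding scls_def using gr_rep[of C k l] by simp

lemma scls_scls:
  assumes C: "C \<in> gr k l"
  shows "scls k l a (scls k l b C) = scls k l (a * b) C"
proof -
  define u where "u = rep C"
  have u: "u \<in> Fsp k l" unfolding u_def by (rule gr_rep[OF C])
  have bu: "(\<lambda>x \<xi>. b * u x \<xi>) \<in> Fsp k l" by (rule Fsp_scal[OF u])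
  define w where "w = rep (cls k l (\<lambda>x \<xi>. b * u x \<xi>))"
  have w: "w \<in> Fsp k l" "(\<lambda>x \<xi>. b * u x \<xi> - w x \<xi>) \<in> Fsp k (l - 1)"
    using rep_cls[OF bu] unfolding w_def by auto
  have e: "(\<lambda>x \<xi>. a * w x \<xi> - a * b * u x \<xi>) = (\<lambda>x \<xi>. (- a) * (b * u x \<xi> - w x \<xi>))"
    by (simp add: algebra_simps)
  have "cls k l (\<lambda>x \<xi>. a * w x \<xi>) = cls k l (\<lambda>x \<xi>. a * b * u x \<xi>)"
  proof (rule cls_eq)
    show "(\<lambda>x \<xi>. a * w x \<xi>) \<in> Fsp k l" by (rule Fsp_scal[OF w(1)])
    show "(\<lambda>x \<xi>. a * b * u x \<xi>) \<in> Fsp k l" using Fsp_scal[OF u, of "a * b"] by simp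
    show "(\<lambda>x \<xi>. a * w x \<xi> - a * b * u x \<xi>) \<in> Fsp k (l - 1)" unfolding e by (rule Fsp_scal[OF w(2)])
  qed
  then show ?thesis unfolding scls_def u_def w_def by simp
qed

context
  fixes \<delta> :: real and k l' :: nat
  assumes k: "1 \<le> k"
begin

lemma P1:
  fixes C :: "('n::finite pt \<Rightarrow> 'n pt \<Rightarrow> real) set"
  assumes C: "C \<in> gr k (Suc l')"
  shows "ialpha_t k (Suc l') C \<in> gr (k - 1) l'" "ialpha ` C \<subseteq> ialpha_t k (Suc l') C"
proof -
  define u where "u = rep C"
  have u: "u \<in> Fsp k (Suc l')" and Cu: "C = cls k (Suc l') u" unfolding u_def by (rule gr_rep[OF C])+
  have iu: "ialpha u \<in> Fsp (k - 1) l'" using Fsp_ialpha[OF u] by simp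
  have it: "ialpha_t k (Suc l') C = cls (k - 1) l' (ialpha u)" unfolding ialpha_t_def u_def by simp
  show "ialpha_t k (Suc l') C \<in> gr (k - 1) l'" unfolding it by (rule cls_in_gr[OF iu])
  show "ialpha ` C \<subseteq> ialpha_t k (Suc l') C"
  proof
    fix y assume "y \<in> ialpha ` C"
    then obtain w where w: "w \<in> C" and y: "y = ialpha w" by blast
    have w1: "w \<in> Fsp k (Suc l')" and w2: "(\<lambda>x \<xi>. u x \<xi> - w x \<xi>) \<in> Fsp k l'"
      using w unfolding Cu mem_cls by auto
    have "ialpha (\<lambda>x \<xi>. u x \<xi> - w x \<xi>) \<in> Fsp (k - 1) (l' - 1)" by (rule Fsp_ialpha[OF w2])
    then have d: "(\<lambda>x \<xi>. ialpha u x \<xi> - ialpha w x \<xi>) \<in> Fsp (k - 1) (l' - 1)"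
      unfolding ialpha_diff[OF Fsp_hp[OF u] Fsp_hp[OF w1]] .
    have iw: "ialpha w \<in> Fsp (k - 1) l'" using Fsp_ialpha[OF w1] by simp
    show "y \<in> ialpha_t k (Suc l') C" unfolding it y mem_cls using iu iw d by simp
  qed
qed

lemma P2:
  fixes D :: "('n::finite pt \<Rightarrow> 'n pt \<Rightarrow> real) set"
  assumes D: "D \<in> gr (k - 1) l'"
  shows "X_t \<delta> k (Suc l') D \<in> gr k (Suc l')" "Xop \<delta> (k - 1) ` D \<subseteq> X_t \<delta> k (Suc l') D"
proof -
  define v where "v = rep D"
  have v: "v \<in> Fsp (k - 1) l'" and Dv: "D = cls (k - 1) l' v" unfolding v_def by (rule gr_rep[OF D])+
  have Xv: "Xop \<delta> (k - 1) v \<in> Fsp k (Suc l')" by (rule Fsp_Xop[OF v k])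
  have xt: "X_t \<delta> k (Suc l') D = cls k (Suc l') (Xop \<delta> (k - 1) v)" unfolding X_t_def v_def by simp
  show "X_t \<delta> k (Suc l') D \<in> gr k (Suc l')" unfolding xt by (rule cls_in_gr[OF Xv])
  show "Xop \<delta> (k - 1) ` D \<subseteq> X_t \<delta> k (Suc l') D"
  proof
    fix y assume "y \<in> Xop \<delta> (k - 1) ` D"
    then obtain w where w: "w \<in> D" and y: "y = Xop \<delta> (k - 1) w" by blast
    have w1: "w \<in> Fsp (k - 1) l'" and w2: "(\<lambda>x \<xi>. v x \<xi> - w x \<xi>) \<in> Fsp (k - 1) (l' - 1)"
      using w unfolding Dv mem_cls by auto
    have "Xop \<delta> (k - 1) (\<lambda>x \<xi>. v x \<xi> - w x \<xi>) \<in> Fsp k l'" by (rule Fsp_Xop'[OF w2 k])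
    then have d: "(\<lambda>x \<xi>. Xop \<delta> (k - 1) v x \<xi> - Xop \<delta> (k - 1) w x \<xi>) \<in> Fsp k l'"
      unfolding Xop_diff[OF Fsp_hp[OF v] Fsp_hp[OF w1]] .
    have Xw: "Xop \<delta> (k - 1) w \<in> Fsp k (Suc l')" by (rule Fsp_Xop[OF w1 k])
    show "y \<in> X_t \<delta> k (Suc l') D" unfolding xt y mem_cls using Xv Xw d by simp
  qed
qed

lemma P3:
  fixes C :: "('n::finite pt \<Rightarrow> 'n pt \<Rightarrow> real) set"
  assumes C: "C \<in> gr k (Suc l')"
  shows "X_t \<delta> k (Suc l') (ialpha_t k (Suc l') C) = scls k (Suc l') (sig CARD('n) \<delta> (k - 1) l') C"
proof -
  define s where "s = sig CARD('n) \<delta> (k - 1) l'"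
  define u where "u = rep C"
  have u: "u \<in> Fsp k (Suc l')" unfolding u_def by (rule gr_rep[OF C])
  have iu: "ialpha u \<in> Fsp (k - 1) l'" using Fsp_ialpha[OF u] by simp
  define w where "w = rep (cls (k - 1) l' (ialpha u))"
  have w: "w \<in> Fsp (k - 1) l'" "(\<lambda>x \<xi>. ialpha u x \<xi> - w x \<xi>) \<in> Fsp (k - 1) (l' - 1)"
    using rep_cls[OF iu] unfolding w_def by auto
  have lhs: "X_t \<delta> k (Suc l') (ialpha_t k (Suc l') C) = cls k (Suc l') (Xop \<delta> (k - 1) w)"
    unfolding X_t_def ialpha_t_def w_def u_def by simp
  have rhs: "scls k (Suc l') s C = cls k (Suc l') (\<lambda>x \<xi>. s * u x \<xi>)"
    unfolding scls_def u_def ..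
  have hu: "hom_poly k u" using Fsp_hp[OF u] .
  have hiu: "hom_poly (k - 1) (ialpha u)" using Fsp_hp[OF iu] .
  have hw: "hom_poly (k - 1) w" using Fsp_hp[OF w(1)] .
  have a: "Xop \<delta> (k - 1) (\<lambda>x \<xi>. w x \<xi> - ialpha u x \<xi>) \<in> Fsp k l'"
    by (rule Fsp_Xop'[OF Fsp_neg_diff[OF w(2)] k])
  have b: "(\<lambda>x \<xi>. Xop \<delta> (k - 1) (ialpha u) x \<xi> - s * u x \<xi>) \<in> Fsp k l'"
    unfolding s_def by (rule K4[OF u k])
  have e: "(\<lambda>x \<xi>. Xop \<delta> (k - 1) w x \<xi> - s * u x \<xi>) =
      (\<lambda>x \<xi>. Xop \<delta> (k - 1) (\<lambda>x \<xi>. w x \<xi> - ialpha u x \<xi>) x \<xi> + (Xop \<delta> (k - 1) (ialpha u) x \<xi> - s * u x \<xi>))"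
    unfolding Xop_diff[OF hw hiu] by simp
  have "cls k (Suc l') (Xop \<delta> (k - 1) w) = cls k (Suc l') (\<lambda>x \<xi>. s * u x \<xi>)"
  proof (rule cls_eq)
    show "Xop \<delta> (k - 1) w \<in> Fsp k (Suc l')" by (rule Fsp_Xop[OF w(1) k])
    show "(\<lambda>x \<xi>. s * u x \<xi>) \<in> Fsp k (Suc l')" by (rule Fsp_scal[OF u])
    show "(\<lambda>x \<xi>. Xop \<delta> (k - 1) w x \<xi> - s * u x \<xi>) \<in> Fsp k (Suc l' - 1)"
      unfolding e using Fsp_add[OF a b] by simp
  qed
  then show ?thesis unfolding lhs s_def[symmetric] rhs .
qed

lemma P4:
  fixes D :: "('n::finite pt \<Rightarrow> 'n pt \<Rightarrow> real) set"
  assumes D: "D \<in> gr (k - 1) l'"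
  shows "ialpha_t k (Suc l') (X_t \<delta> k (Suc l') D) = scls (k - 1) l' (sig CARD('n) \<delta> (k - 1) l') D"
proof -
  define s where "s = sig CARD('n) \<delta> (k - 1) l'"
  define v where "v = rep D"
  have v: "v \<in> Fsp (k - 1) l'" unfolding v_def by (rule gr_rep[OF D])
  have Xv: "Xop \<delta> (k - 1) v \<in> Fsp k (Suc l')" by (rule Fsp_Xop[OF v k])
  define w where "w = rep (cls k (Suc l') (Xop \<delta> (k - 1) v))"
  have w: "w \<in> Fsp k (Suc l')" "(\<lambda>x \<xi>. Xop \<delta> (k - 1) v x \<xi> - w x \<xi>) \<in> Fsp k l'"
    using rep_cls[OF Xv] unfolding w_def by auto
  have lhs: "ialpha_t k (Suc l') (X_t \<delta> k (Suc l') D) = cls (k - 1) l' (ialpha w)"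
    unfolding X_t_def ialpha_t_def w_def v_def by simp
  have rhs: "scls (k - 1) l' s D = cls (k - 1) l' (\<lambda>x \<xi>. s * v x \<xi>)"
    unfolding scls_def v_def ..
  have hw: "hom_poly k w" using Fsp_hp[OF w(1)] .
  have hXv: "hom_poly k (Xop \<delta> (k - 1) v)" using Fsp_hp[OF Xv] .
  have a: "ialpha (\<lambda>x \<xi>. w x \<xi> - Xop \<delta> (k - 1) v x \<xi>) \<in> Fsp (k - 1) (l' - 1)"
    by (rule Fsp_ialpha[OF Fsp_neg_diff[OF w(2)]])
  have b: "(\<lambda>x \<xi>. ialpha (Xop \<delta> (k - 1) v) x \<xi> - s * v x \<xi>) \<in> Fsp (k - 1) (l' - 1)"
    unfolding s_def by (rule K5[OF v])
  have e: "(\<lambda>x \<xi>. ialpha w x \<xi> - s * v x \<xi>) =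
      (\<lambda>x \<xi>. ialpha (\<lambda>x \<xi>. w x \<xi> - Xop \<delta> (k - 1) v x \<xi>) x \<xi> + (ialpha (Xop \<delta> (k - 1) v) x \<xi> - s * v x \<xi>))"
    unfolding ialpha_diff[OF hw hXv] by simp
  have "cls (k - 1) l' (ialpha w) = cls (k - 1) l' (\<lambda>x \<xi>. s * v x \<xi>)"
  proof (rule cls_eq)
    show "ialpha w \<in> Fsp (k - 1) l'" using Fsp_ialpha[OF w(1)] by simp
    show "(\<lambda>x \<xi>. s * v x \<xi>) \<in> Fsp (k - 1) l'" by (rule Fsp_scal[OF v])
    show "(\<lambda>x \<xi>. ialpha w x \<xi> - s * v x \<xi>) \<in> Fsp (k - 1) (l' - 1)"
      unfolding e by (rule Fsp_add[OF a b])
  qed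
  then show ?thesis unfolding lhs s_def[symmetric] rhs .
qed

lemma P5:
  fixes C :: "('n::finite pt \<Rightarrow> 'n pt \<Rightarrow> real) set"
  assumes C: "C \<in> gr k (Suc l')"
  shows "ialpha_t k (Suc l') (scls k (Suc l') c C) = scls (k - 1) l' c (ialpha_t k (Suc l') C)"
proof -
  define u where "u = rep C"
  have u: "u \<in> Fsp k (Suc l')" unfolding u_def by (rule gr_rep[OF C])
  have cu: "(\<lambda>x \<xi>. c * u x \<xi>) \<in> Fsp k (Suc l')" by (rule Fsp_scal[OF u])
  have iu: "ialpha u \<in> Fsp (k - 1) l'" using Fsp_ialpha[OF u] by simp
  define w where "w = rep (cls k (Suc l') (\<lambda>x \<xi>. c * u x \<xi>))"
  have w: "w \<in> Fsp k (Suc l')" "(\<lambda>x \<xi>. c * u x \<xi> - w x \<xi>) \<in> Fsp k l'"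
    using rep_cls[OF cu] unfolding w_def by auto
  define w' where "w' = rep (cls (k - 1) l' (ialpha u))"
  have w': "w' \<in> Fsp (k - 1) l'" "(\<lambda>x \<xi>. ialpha u x \<xi> - w' x \<xi>) \<in> Fsp (k - 1) (l' - 1)"
    using rep_cls[OF iu] unfolding w'_def by auto
  have lhs: "ialpha_t k (Suc l') (scls k (Suc l') c C) = cls (k - 1) l' (ialpha w)"
    unfolding ialpha_t_def scls_def w_def u_def by simp
  have rhs: "scls (k - 1) l' c (ialpha_t k (Suc l') C) = cls (k - 1) l' (\<lambda>x \<xi>. c * w' x \<xi>)"
    unfolding ialpha_t_def scls_def w'_def u_def by simp
  have hu: "hom_poly k u" using Fsp_hp[OF u] .
  have hcu: "hom_poly k (\<lambda>x \<xi>. c * u x \<xi>)" using Fsp_hp[OF cu] .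
  have hw: "hom_poly k w" using Fsp_hp[OF w(1)] .
  have icu: "ialpha (\<lambda>x \<xi>. c * u x \<xi>) = (\<lambda>x \<xi>. c * ialpha u x \<xi>)"
    using ialpha_lin[OF hu hu, of c 0] by simp
  have a: "ialpha (\<lambda>x \<xi>. c * u x \<xi> - w x \<xi>) \<in> Fsp (k - 1) (l' - 1)"
    by (rule Fsp_ialpha[OF w(2)])
  have b: "(\<lambda>x \<xi>. c * (ialpha u x \<xi> - w' x \<xi>)) \<in> Fsp (k - 1) (l' - 1)"
    by (rule Fsp_scal[OF w'(2)])
  have e: "(\<lambda>x \<xi>. ialpha w x \<xi> - c * w' x \<xi>) =
      (\<lambda>x \<xi>. c * (ialpha u x \<xi> - w' x \<xi>) - ialpha (\<lambda>x \<xi>. c * u x \<xi> - w x \<xi>) x \<xi>)"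
    unfolding ialpha_diff[OF hcu hw] icu by (simp add: algebra_simps)
  have "cls (k - 1) l' (ialpha w) = cls (k - 1) l' (\<lambda>x \<xi>. c * w' x \<xi>)"
  proof (rule cls_eq)
    show "ialpha w \<in> Fsp (k - 1) l'" using Fsp_ialpha[OF w(1)] by simp
    show "(\<lambda>x \<xi>. c * w' x \<xi>) \<in> Fsp (k - 1) l'" by (rule Fsp_scal[OF w'(1)])
    show "(\<lambda>x \<xi>. ialpha w x \<xi> - c * w' x \<xi>) \<in> Fsp (k - 1) (l' - 1)"
      unfolding e by (rule Fsp_diff[OF b a])
  qed
  then show ?thesis unfolding lhs rhs .
qed

end

theorem proposition6p2:
  fixes \<delta> :: real and k l :: nat
  assumes "k \<ge> 1" and "1 \<le> l" and "l \<le> k + 1"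
  defines "r \<equiv> rr CARD('n::finite) \<delta> (l - 1) (k + 1 - l)"
  shows "(\<forall>C \<in> (gr k l :: ('n pt \<Rightarrow> 'n pt \<Rightarrow> real) set set).
            \<exists>D \<in> gr (k - 1) (l - 1). ialpha ` C \<subseteq> D)
       \<and> (\<forall>D \<in> (gr (k - 1) (l - 1) :: ('n pt \<Rightarrow> 'n pt \<Rightarrow> real) set set).
            \<exists>C \<in> gr k l. Xop \<delta> (k - 1) ` D \<subseteq> C)
       \<and> (\<forall>C \<in> (gr k l :: ('n pt \<Rightarrow> 'n pt \<Rightarrow> real) set set).
            X_t \<delta> k l (ialpha_t k l C) = scls k l r C)
       \<and> (\<forall>D \<in> (gr (k - 1) (l - 1) :: ('n pt \<Rightarrow> 'n pt \<Rightarrow> real) set set).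
            ialpha_t k l (X_t \<delta> k l D) = scls (k - 1) (l - 1) r D)
       \<and> (r \<noteq> 0 \<longrightarrow>
            bij_betw (ialpha_t k l) (gr k l :: ('n pt \<Rightarrow> 'n pt \<Rightarrow> real) set set) (gr (k - 1) (l - 1))
          \<and> (\<forall>D \<in> (gr (k - 1) (l - 1) :: ('n pt \<Rightarrow> 'n pt \<Rightarrow> real) set set).
               the_inv_into (gr k l) (ialpha_t k l) D = scls k l (1 / r) (X_t \<delta> k l D)))"
proof -
  obtain l' where l: "l = Suc l'" using assms(2) by (cases l) auto
  have rs: "r = sig CARD('n) \<delta> (k - 1) l'"
    unfolding r_def using rr_sig[OF assms(1-3), of "CARD('n)" \<delta>] l by simp
  have k: "1 \<le> k" using assms(1) by simp
  note P1 = P1[OF k] and P2 = P2[OF k] and P3 = P3[OF k] and P4 = P4[OF k] and P5 = P5[OF k]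
  have c1: "\<forall>C \<in> (gr k (Suc l') :: ('n pt \<Rightarrow> 'n pt \<Rightarrow> real) set set). \<exists>D \<in> gr (k - 1) l'. ialpha ` C \<subseteq> D"
  proof (intro ballI)
    fix C :: "('n pt \<Rightarrow> 'n pt \<Rightarrow> real) set" assume C: "C \<in> gr k (Suc l')"
    show "\<exists>D \<in> gr (k - 1) l'. ialpha ` C \<subseteq> D" using P1(1)[OF C] P1(2)[OF C] by blast
  qed
  have c2: "\<forall>D \<in> (gr (k - 1) l' :: ('n pt \<Rightarrow> 'n pt \<Rightarrow> real) set set). \<exists>C \<in> gr k (Suc l'). Xop \<delta> (k - 1) ` D \<subseteq> C"
  proof (intro ballI)
    fix D :: "('n pt \<Rightarrow> 'n pt \<Rightarrow> real) set" assume D: "D \<in> gr (k - 1) l'"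
    show "\<exists>C \<in> gr k (Suc l'). Xop \<delta> (k - 1) ` D \<subseteq> C" using P2(1)[OF D] P2(2)[OF D] by blast
  qed
  have c3: "\<forall>C \<in> (gr k (Suc l') :: ('n pt \<Rightarrow> 'n pt \<Rightarrow> real) set set). X_t \<delta> k (Suc l') (ialpha_t k (Suc l') C) = scls k (Suc l') r C"
  proof (intro ballI)
    fix C :: "('n pt \<Rightarrow> 'n pt \<Rightarrow> real) set" assume C: "C \<in> gr k (Suc l')"
    show "X_t \<delta> k (Suc l') (ialpha_t k (Suc l') C) = scls k (Suc l') r C" unfolding rs by (rule P3[OF C])
  qed
  have c4: "\<forall>D \<in> (gr (k - 1) l' :: ('n pt \<Rightarrow> 'n pt \<Rightarrow> real) set set). ialpha_t k (Suc l') (X_t \<delta> k (Suc l') D) = scls (k - 1) l' r D"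
  proof (intro ballI)
    fix D :: "('n pt \<Rightarrow> 'n pt \<Rightarrow> real) set" assume D: "D \<in> gr (k - 1) l'"
    show "ialpha_t k (Suc l') (X_t \<delta> k (Suc l') D) = scls (k - 1) l' r D" unfolding rs by (rule P4[OF D])
  qed
  have c5: "r \<noteq> 0 \<longrightarrow> bij_betw (ialpha_t k (Suc l')) (gr k (Suc l') :: ('n pt \<Rightarrow> 'n pt \<Rightarrow> real) set set) (gr (k - 1) l')
          \<and> (\<forall>D \<in> (gr (k - 1) l' :: ('n pt \<Rightarrow> 'n pt \<Rightarrow> real) set set).
               the_inv_into (gr k (Suc l')) (ialpha_t k (Suc l')) D = scls k (Suc l') (1 / r) (X_t \<delta> k (Suc l') D))"
  proof
    assume r0: "r \<noteq> 0"
    define g where "g D = scls k (Suc l') (1 / r) (X_t \<delta> k (Suc l') D)" for D :: "('n pt \<Rightarrow> 'n pt \<Rightarrow> real) set"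
    have left: "\<forall>C \<in> (gr k (Suc l') :: ('n pt \<Rightarrow> 'n pt \<Rightarrow> real) set set). g (ialpha_t k (Suc l') C) = C"
    proof
      fix C :: "('n pt \<Rightarrow> 'n pt \<Rightarrow> real) set" assume C: "C \<in> gr k (Suc l')"
      have "g (ialpha_t k (Suc l') C) = scls k (Suc l') (1 / r) (scls k (Suc l') r C)"
        unfolding g_def bspec[OF c3 C] ..
      also have "\<dots> = scls k (Suc l') 1 C" unfolding scls_scls[OF C] using r0 by simp
      also have "\<dots> = C" by (rule scls_1[OF C])
      finally show "g (ialpha_t k (Suc l') C) = C" .
    qed
    have gin: "g D \<in> gr k (Suc l')" if D: "D \<in> (gr (k - 1) l' :: ('n pt \<Rightarrow> 'n pt \<Rightarrow> real) set set)" for D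
      unfolding g_def by (rule scls_in[OF P2(1)[OF D]])
    have right: "\<forall>D \<in> (gr (k - 1) l' :: ('n pt \<Rightarrow> 'n pt \<Rightarrow> real) set set). ialpha_t k (Suc l') (g D) = D"
    proof
      fix D :: "('n pt \<Rightarrow> 'n pt \<Rightarrow> real) set" assume D: "D \<in> gr (k - 1) l'"
      have "ialpha_t k (Suc l') (g D) = scls (k - 1) l' (1 / r) (ialpha_t k (Suc l') (X_t \<delta> k (Suc l') D))"
        unfolding g_def by (rule P5[OF P2(1)[OF D]])
      also have "\<dots> = scls (k - 1) l' (1 / r) (scls (k - 1) l' r D)" unfolding bspec[OF c4 D] ..
      also have "\<dots> = scls (k - 1) l' 1 D" unfolding scls_scls[OF D] using r0 by simp
      also have "\<dots> = D" by (rule scls_1[OF D])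
      finally show "ialpha_t k (Suc l') (g D) = D" .
    qed
    have bij: "bij_betw (ialpha_t k (Suc l')) (gr k (Suc l') :: ('n pt \<Rightarrow> 'n pt \<Rightarrow> real) set set) (gr (k - 1) l')"
      by (rule bij_betw_byWitness[OF left right image_subsetI[OF P1(1)] image_subsetI[OF gin]])
    have inv: "the_inv_into (gr k (Suc l')) (ialpha_t k (Suc l')) D = g D" if D: "D \<in> (gr (k - 1) l' :: ('n pt \<Rightarrow> 'n pt \<Rightarrow> real) set set)" for D
      by (rule the_inv_into_f_eq[OF bij_betw_imp_inj_on[OF bij] bspec[OF right D] gin[OF D]])
    show "bij_betw (ialpha_t k (Suc l')) (gr k (Suc l') :: ('n pt \<Rightarrow> 'n pt \<Rightarrow> real) set set) (gr (k - 1) l')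
          \<and> (\<forall>D \<in> (gr (k - 1) l' :: ('n pt \<Rightarrow> 'n pt \<Rightarrow> real) set set).
               the_inv_into (gr k (Suc l')) (ialpha_t k (Suc l')) D = scls k (Suc l') (1 / r) (X_t \<delta> k (Suc l') D))"
    proof (intro conjI ballI)
      show "bij_betw (ialpha_t k (Suc l')) (gr k (Suc l') :: ('n pt \<Rightarrow> 'n pt \<Rightarrow> real) set set) (gr (k - 1) l')" by (rule bij)
      fix D :: "('n pt \<Rightarrow> 'n pt \<Rightarrow> real) set" assume D: "D \<in> gr (k - 1) l'"
      show "the_inv_into (gr k (Suc l')) (ialpha_t k (Suc l')) D = scls k (Suc l') (1 / r) (X_t \<delta> k (Suc l') D)"
        using inv[OF D] unfolding g_def .
    qed
  qed
  show ?thesis unfolding l diff_Suc_1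
    by (rule conjI[OF c1 conjI[OF c2 conjI[OF c3 conjI[OF c4 c5]]]])
qed

end
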